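(* Let $(M,G,J)$ be a conformally balanced KT manifold of complex dimension $m$ with torsion $H$ and Lee form $\theta=2d\Phi$, and let $E\to M$ be a complex vector bundle with connection $A$ and curvature $F$. Suppose $F$ satisfies the Donaldson equations: $F^{2,0}=F^{0,2}=0$ (with respect to $J$) and $\Omega^{ij}F_{ij}=0$. Then $F$ satisfies the field equation $$\nabla^{(+)i}\big(e^{-2\Phi}F_{ij}\big)=0,$$ where $\nabla^{(+)}$ acts on the form indices of $F$ and the gauge connection $A$ acts on its bundle indices, and indices are raised with $G$.
   Context: Let $(M,G,J)$ be a Hermitian manifold of real dimension $2m$ with Levi-Civita connection $\nabla$ (Christoffel symbols $\Gamma_A{}^M{}_N$), and let $H$ be a real 3-form. Define connections $\nabla^{(\pm)}$ with Christoffel symbols $\Gamma^{(\pm)}{}_A{}^M{}_N=\Gamma_A{}^M{}_N\pm\tfrac12 H^M{}_{AN}$, i.e. $\nabla^{(\pm)}_MY^N=\nabla_MY^N\pm\tfrac12 H^N{}_{MR}Y^R$, extended to forms in the usual way. $(M,G,J)$ is a Kähler with torsion (KT) manifold with torsion $H$ if $\nabla^{(+)}J=0$. The Kähler form is $\Omega_{ij}=G_{ik}J^k{}_j$, and the Lee form is $\theta_i=\tfrac12 J^j{}_iH_{jkl}\Omega^{kl}$. A KT manifold is conformally balanced if $\theta=2d\Phi$ for some real function $\Phi$ on $M$. *)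

theory Defs
  imports "HOL-Analysis.Analysis"
begin

(* Points of a coordinate chart are
   x :: real^'n (real dimension CARD('n) = 2m); coordinate indices are
   elements of the finite type 'n. *)

definition pd :: "(real^'n \<Rightarrow> 'b::real_normed_vector) \<Rightarrow> 'n \<Rightarrow> real^'n \<Rightarrow> 'b" where
  "pd f i x = frechet_derivative f (at x) (axis i 1)"

fun Ck :: "nat \<Rightarrow> (real^'n) set \<Rightarrow> (real^'n \<Rightarrow> 'b::real_normed_vector) \<Rightarrow> bool" where
  "Ck 0 U f = continuous_on U f"
| "Ck (Suc k) U f = (continuous_on U f \<and> f differentiable_on U \<and> (\<forall>i. Ck k U (pd f i)))"

definition smooth_fn :: "(real^'n) set \<Rightarrow> (real^'n \<Rightarrow> 'b::real_normed_vector) \<Rightarrow> bool" where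
  "smooth_fn U f \<longleftrightarrow> (\<forall>k. Ck k U f)"

definition Ginv :: "(real^'n \<Rightarrow> 'n \<Rightarrow> 'n \<Rightarrow> real) \<Rightarrow> real^'n \<Rightarrow> 'n \<Rightarrow> 'n \<Rightarrow> real" where
  "Ginv G x i j = matrix_inv (\<chi> a b. G x a b) $ i $ j"

(* Levi-Civita Christoffel symbols  LC G x k i j = \<Gamma>_i{}^k{}_j = \<Gamma>^k_{ij} *)
definition LC :: "(real^'n \<Rightarrow> 'n \<Rightarrow> 'n \<Rightarrow> real) \<Rightarrow> real^'n \<Rightarrow> 'n \<Rightarrow> 'n \<Rightarrow> 'n \<Rightarrow> real" where
  "LC G x k i j = (1/2) * (\<Sum>l\<in>UNIV. Ginv G x k l *
      (pd (\<lambda>y. G y l j) i x + pd (\<lambda>y. G y l i) j x - pd (\<lambda>y. G y i j) l x))"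

definition Hup :: "(real^'n \<Rightarrow> 'n \<Rightarrow> 'n \<Rightarrow> real) \<Rightarrow> (real^'n \<Rightarrow> 'n \<Rightarrow> 'n \<Rightarrow> 'n \<Rightarrow> real)
     \<Rightarrow> real^'n \<Rightarrow> 'n \<Rightarrow> 'n \<Rightarrow> 'n \<Rightarrow> real" where
  "Hup G H x k i j = (\<Sum>l\<in>UNIV. Ginv G x k l * H x l i j)"

(* \<Gamma>^{(+)}{}_A{}^M{}_N = \<Gamma>_A{}^M{}_N + 1/2 H^M{}_{AN};  Gplus G H x a m n *)
definition Gplus :: "(real^'n \<Rightarrow> 'n \<Rightarrow> 'n \<Rightarrow> real) \<Rightarrow> (real^'n \<Rightarrow> 'n \<Rightarrow> 'n \<Rightarrow> 'n \<Rightarrow> real)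
     \<Rightarrow> real^'n \<Rightarrow> 'n \<Rightarrow> 'n \<Rightarrow> 'n \<Rightarrow> real" where
  "Gplus G H x a m n = LC G x m a n + (1/2) * Hup G H x m a n"

definition riem_metric :: "(real^'n) set \<Rightarrow> (real^'n \<Rightarrow> 'n \<Rightarrow> 'n \<Rightarrow> real) \<Rightarrow> bool" where
  "riem_metric U G \<longleftrightarrow> (\<forall>i j. smooth_fn U (\<lambda>x. G x i j)) \<and>
     (\<forall>x\<in>U. \<forall>i j. G x i j = G x j i) \<and>
     (\<forall>x\<in>U. \<forall>v::real^'n. v \<noteq> 0 \<longrightarrow> (\<Sum>i\<in>UNIV. \<Sum>j\<in>UNIV. G x i j * v$i * v$j) > 0)"

(* J x k j = J^k{}_j ; Nijenhuis tensor N^k{}_{ij} *)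
definition nijenhuis :: "(real^'n \<Rightarrow> 'n \<Rightarrow> 'n \<Rightarrow> real) \<Rightarrow> real^'n \<Rightarrow> 'n \<Rightarrow> 'n \<Rightarrow> 'n \<Rightarrow> real" where
  "nijenhuis J x k i j =
     (\<Sum>l\<in>UNIV. J x l i * pd (\<lambda>y. J y k j) l x - J x l j * pd (\<lambda>y. J y k i) l x
        - J x k l * (pd (\<lambda>y. J y l j) i x - pd (\<lambda>y. J y l i) j x))"

definition hermitian :: "(real^'n) set \<Rightarrow> (real^'n \<Rightarrow> 'n \<Rightarrow> 'n \<Rightarrow> real) \<Rightarrow> (real^'n \<Rightarrow> 'n \<Rightarrow> 'n \<Rightarrow> real) \<Rightarrow> bool" where
  "hermitian U G J \<longleftrightarrow> riem_metric U G \<and>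
     (\<forall>k j. smooth_fn U (\<lambda>x. J x k j)) \<and>
     (\<forall>x\<in>U. \<forall>k j. (\<Sum>l\<in>UNIV. J x k l * J x l j) = (if k = j then -1 else 0)) \<and>
     (\<forall>x\<in>U. \<forall>i j. (\<Sum>k\<in>UNIV. \<Sum>l\<in>UNIV. J x k i * J x l j * G x k l) = G x i j) \<and>
     (\<forall>x\<in>U. \<forall>k i j. nijenhuis J x k i j = 0)"

definition three_form :: "(real^'n) set \<Rightarrow> (real^'n \<Rightarrow> 'n \<Rightarrow> 'n \<Rightarrow> 'n \<Rightarrow> real) \<Rightarrow> bool" where
  "three_form U H \<longleftrightarrow> (\<forall>i j k. smooth_fn U (\<lambda>x. H x i j k)) \<and>
     (\<forall>x\<in>U. \<forall>i j k. H x i j k = - H x j i k \<and> H x i j k = - H x i k j)"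

(* KT: \<nabla>^{(+)}_i J^k{}_j = 0 *)
definition KT :: "(real^'n) set \<Rightarrow> (real^'n \<Rightarrow> 'n \<Rightarrow> 'n \<Rightarrow> real) \<Rightarrow> (real^'n \<Rightarrow> 'n \<Rightarrow> 'n \<Rightarrow> real)
     \<Rightarrow> (real^'n \<Rightarrow> 'n \<Rightarrow> 'n \<Rightarrow> 'n \<Rightarrow> real) \<Rightarrow> bool" where
  "KT U G J H \<longleftrightarrow> hermitian U G J \<and> three_form U H \<and>
     (\<forall>x\<in>U. \<forall>i k j. pd (\<lambda>y. J y k j) i x
        + (\<Sum>l\<in>UNIV. Gplus G H x i k l * J x l j)
        - (\<Sum>l\<in>UNIV. Gplus G H x i l j * J x k l) = 0)"

definition Om :: "(real^'n \<Rightarrow> 'n \<Rightarrow> 'n \<Rightarrow> real) \<Rightarrow> (real^'n \<Rightarrow> 'n \<Rightarrow> 'n \<Rightarrow> real) \<Rightarrow> real^'n \<Rightarrow> 'n \<Rightarrow> 'n \<Rightarrow> real" where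
  "Om G J x i j = (\<Sum>k\<in>UNIV. G x i k * J x k j)"

definition Omup :: "(real^'n \<Rightarrow> 'n \<Rightarrow> 'n \<Rightarrow> real) \<Rightarrow> (real^'n \<Rightarrow> 'n \<Rightarrow> 'n \<Rightarrow> real) \<Rightarrow> real^'n \<Rightarrow> 'n \<Rightarrow> 'n \<Rightarrow> real" where
  "Omup G J x k l = (\<Sum>a\<in>UNIV. \<Sum>b\<in>UNIV. Ginv G x k a * Ginv G x l b * Om G J x a b)"

definition Lee :: "(real^'n \<Rightarrow> 'n \<Rightarrow> 'n \<Rightarrow> real) \<Rightarrow> (real^'n \<Rightarrow> 'n \<Rightarrow> 'n \<Rightarrow> real)
     \<Rightarrow> (real^'n \<Rightarrow> 'n \<Rightarrow> 'n \<Rightarrow> 'n \<Rightarrow> real) \<Rightarrow> real^'n \<Rightarrow> 'n \<Rightarrow> real" where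
  "Lee G J H x i = (1/2) * (\<Sum>j\<in>UNIV. \<Sum>k\<in>UNIV. \<Sum>l\<in>UNIV. J x j i * H x j k l * Omup G J x k l)"

definition conf_balanced :: "(real^'n) set \<Rightarrow> (real^'n \<Rightarrow> 'n \<Rightarrow> 'n \<Rightarrow> real) \<Rightarrow> (real^'n \<Rightarrow> 'n \<Rightarrow> 'n \<Rightarrow> real)
     \<Rightarrow> (real^'n \<Rightarrow> 'n \<Rightarrow> 'n \<Rightarrow> 'n \<Rightarrow> real) \<Rightarrow> (real^'n \<Rightarrow> real) \<Rightarrow> bool" where
  "conf_balanced U G J H \<Phi> \<longleftrightarrow> KT U G J H \<and> smooth_fn U \<Phi> \<and>
     (\<forall>x\<in>U. \<forall>i. Lee G J H x i = 2 * pd \<Phi> i x)"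

(* gauge connection A_i(x) (gl(r,C)-valued 1-form in a local trivialisation)
   and its curvature F_{ij} = \<partial>_i A_j - \<partial>_j A_i + [A_i, A_j] *)
definition curv :: "(real^'n \<Rightarrow> 'n \<Rightarrow> complex^'r^'r) \<Rightarrow> real^'n \<Rightarrow> 'n \<Rightarrow> 'n \<Rightarrow> complex^'r^'r" where
  "curv A x i j = pd (\<lambda>y. A y j) i x - pd (\<lambda>y. A y i) j x + (A x i ** A x j - A x j ** A x i)"

(* F^{2,0} = F^{0,2} = 0 w.r.t. J, i.e. F is of type (1,1):
   the (2,0)+(0,2) part (1/2)(F_{ij} - J^k{}_i J^l{}_j F_{kl}) vanishes *)
definition type11 :: "(real^'n \<Rightarrow> 'n \<Rightarrow> 'n \<Rightarrow> real) \<Rightarrow> (real^'n \<Rightarrow> 'n \<Rightarrow> 'n \<Rightarrow> 'b::real_vector) \<Rightarrow> real^'n \<Rightarrow> bool" where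
  "type11 J F x \<longleftrightarrow> (\<forall>i j. (\<Sum>k\<in>UNIV. \<Sum>l\<in>UNIV. (J x k i * J x l j) *\<^sub>R F x k l) = F x i j)"

definition Dplus :: "(real^'n \<Rightarrow> 'n \<Rightarrow> 'n \<Rightarrow> real) \<Rightarrow> (real^'n \<Rightarrow> 'n \<Rightarrow> 'n \<Rightarrow> 'n \<Rightarrow> real)
     \<Rightarrow> (real^'n \<Rightarrow> 'n \<Rightarrow> complex^'r^'r) \<Rightarrow> (real^'n \<Rightarrow> 'n \<Rightarrow> 'n \<Rightarrow> complex^'r^'r)
     \<Rightarrow> real^'n \<Rightarrow> 'n \<Rightarrow> 'n \<Rightarrow> 'n \<Rightarrow> complex^'r^'r" where
  "Dplus G H A T x k i j = pd (\<lambda>y. T y i j) k x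
     - (\<Sum>l\<in>UNIV. Gplus G H x k l i *\<^sub>R T x l j)
     - (\<Sum>l\<in>UNIV. Gplus G H x k l j *\<^sub>R T x i l)
     + (A x k ** T x i j - T x i j ** A x k)"

end

theory Submission
  imports Defs
begin


lemma pd_eq: "(f has_derivative f') (at x) \<Longrightarrow> pd f i x = f' (axis i 1)"
  unfolding pd_def using frechet_derivative_at by metis

lemma pd_hd: "f differentiable (at x) \<Longrightarrow> (f has_derivative (\<lambda>h. frechet_derivative f (at x) h)) (at x)"
  using frechet_derivative_works by auto

lemma pd_local:
  assumes "open U" "x \<in> U" "\<And>y. y \<in> U \<Longrightarrow> f y = g y"
  shows "pd f i x = pd g i x"
proof -
  have "\<And>f'. (f has_derivative f') (at x) \<longleftrightarrow> (g has_derivative f') (at x)"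
    using has_derivative_transform_within_open[OF _ assms(1,2)] assms(3) by metis
  then show ?thesis unfolding pd_def frechet_derivative_def by simp
qed

lemma smooth_pd: "smooth_fn U f \<Longrightarrow> smooth_fn U (pd f i)"
  unfolding smooth_fn_def by (metis Ck.simps(2))

lemma smooth_diff: "open U \<Longrightarrow> x \<in> U \<Longrightarrow> smooth_fn U f \<Longrightarrow> f differentiable (at x)"
  unfolding smooth_fn_def by (metis Ck.simps(2) differentiable_on_eq_differentiable_at)

lemma smooth_cont: "smooth_fn U f \<Longrightarrow> continuous_on U f"
  unfolding smooth_fn_def by (metis Ck.simps(1))


lemma dir_deriv:
  fixes f :: "real^'n \<Rightarrow> 'b::real_normed_vector"
  assumes "f differentiable (at (q + s0 *\<^sub>R v))"
  shows "((\<lambda>s. f (q + s *\<^sub>R v)) has_derivative (\<lambda>h. h *\<^sub>R frechet_derivative f (at (q + s0 *\<^sub>R v)) v)) (at s0 within S)"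
proof -
  let ?D = "frechet_derivative f (at (q + s0 *\<^sub>R v))"
  have l: "linear ?D" using linear_frechet_derivative[OF assms] .
  have g: "((\<lambda>s. q + s *\<^sub>R v) has_derivative (\<lambda>h. h *\<^sub>R v)) (at s0 within S)"
    by (auto intro!: derivative_eq_intros)
  have fd: "(f has_derivative ?D) (at ((\<lambda>s. q + s *\<^sub>R v) s0) within ((\<lambda>s. q + s *\<^sub>R v) ` S))"
    using assms frechet_derivative_works has_derivative_at_withinI by fastforce
  have "((f \<circ> (\<lambda>s. q + s *\<^sub>R v)) has_derivative (?D \<circ> (\<lambda>h. h *\<^sub>R v))) (at s0 within S)"
    by (rule diff_chain_within[OF g fd])
  moreover have "(?D \<circ> (\<lambda>h. h *\<^sub>R v)) = (\<lambda>h. h *\<^sub>R ?D v)"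
    using l by (auto simp: linear_scale o_def)
  ultimately show ?thesis by (simp add: o_def)
qed

lemma pd_frechet: "pd f i x = frechet_derivative f (at x) (axis i 1)"
  by (simp add: pd_def)

lemma dist_add_self: "dist x (x + w) = norm (w::'a::real_normed_vector)"
  by (metis add_diff_cancel_left' dist_commute dist_norm)

lemma mixed_mvt:
  fixes f :: "real^'n \<Rightarrow> real"
  assumes df: "\<And>y. y \<in> ball x r \<Longrightarrow> f differentiable (at y)"
    and dg: "\<And>y. y \<in> ball x r \<Longrightarrow> (pd f i) differentiable (at y)"
    and t: "0 < t" "2 * t < r"
  shows "\<exists>\<xi>. dist x \<xi> \<le> 2 * t \<and>
    f (x + t *\<^sub>R axis i 1 + t *\<^sub>R axis k 1) - f (x + t *\<^sub>R axis i 1) - f (x + t *\<^sub>R axis k 1) + f x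
      = t * t * pd (pd f i) k \<xi>"
proof -
  let ?ei = "axis i 1 :: real^'n" and ?ek = "axis k 1 :: real^'n"
  have nei: "norm ?ei = 1" "norm ?ek = 1" by simp_all
  have inball: "x + s *\<^sub>R ?ei + u *\<^sub>R ?ek \<in> ball x r" if "0 \<le> s" "s \<le> t" "0 \<le> u" "u \<le> t" for s u
  proof -
    have "norm (s *\<^sub>R ?ei + u *\<^sub>R ?ek) \<le> norm (s *\<^sub>R ?ei) + norm (u *\<^sub>R ?ek)" by (rule norm_triangle_ineq)
    also have "\<dots> = s + u" using that nei by simp
    finally show ?thesis using that t by (simp add: dist_add_self add.assoc)
  qed
  define \<phi> where "\<phi> s = f (x + s *\<^sub>R ?ei + t *\<^sub>R ?ek) - f (x + s *\<^sub>R ?ei)" for s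
  have "\<exists>\<sigma>\<in>{0<..<t}. \<phi> t - \<phi> 0 = (\<lambda>h. h * (pd f i (x + \<sigma> *\<^sub>R ?ei + t *\<^sub>R ?ek) - pd f i (x + \<sigma> *\<^sub>R ?ei))) (t - 0)"
  proof (rule mvt_simple[OF t(1)])
    fix s assume s: "0 \<le> s" "s \<le> t"
    have e1: "(\<lambda>s. f (x + s *\<^sub>R ?ei + t *\<^sub>R ?ek)) = (\<lambda>s. f ((x + t *\<^sub>R ?ek) + s *\<^sub>R ?ei))"
      by (simp add: algebra_simps)
    have d1: "((\<lambda>s. f ((x + t *\<^sub>R ?ek) + s *\<^sub>R ?ei)) has_derivative (\<lambda>h. h *\<^sub>R pd f i (x + s *\<^sub>R ?ei + t *\<^sub>R ?ek))) (at s within {0..t})"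
      using dir_deriv[of f "x + t *\<^sub>R ?ek" s ?ei] df[OF inball[OF s, of t]] t
      by (simp add: pd_def algebra_simps)
    have d2: "((\<lambda>s. f (x + s *\<^sub>R ?ei)) has_derivative (\<lambda>h. h *\<^sub>R pd f i (x + s *\<^sub>R ?ei))) (at s within {0..t})"
      using dir_deriv[of f x s ?ei] df[OF inball[OF s, of 0]] t
      by (simp add: pd_def)
    show "(\<phi> has_derivative (\<lambda>h. h * (pd f i (x + s *\<^sub>R ?ei + t *\<^sub>R ?ek) - pd f i (x + s *\<^sub>R ?ei)))) (at s within {0..t})"
      unfolding \<phi>_def using has_derivative_diff[OF d1[folded e1] d2]
      by (simp add: algebra_simps)
  qed
  then obtain \<sigma> where \<sigma>: "0 < \<sigma>" "\<sigma> < t"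
    and e\<sigma>: "\<phi> t - \<phi> 0 = t * (pd f i (x + \<sigma> *\<^sub>R ?ei + t *\<^sub>R ?ek) - pd f i (x + \<sigma> *\<^sub>R ?ei))" by auto
  define \<psi> where "\<psi> u = pd f i (x + \<sigma> *\<^sub>R ?ei + u *\<^sub>R ?ek)" for u
  have "\<exists>\<tau>\<in>{0<..<t}. \<psi> t - \<psi> 0 = (\<lambda>h. h * pd (pd f i) k (x + \<sigma> *\<^sub>R ?ei + \<tau> *\<^sub>R ?ek)) (t - 0)"
  proof (rule mvt_simple[OF t(1)])
    fix u assume u: "0 \<le> u" "u \<le> t"
    show "(\<psi> has_derivative (\<lambda>h. h * pd (pd f i) k (x + \<sigma> *\<^sub>R ?ei + u *\<^sub>R ?ek))) (at u within {0..t})"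
      unfolding \<psi>_def using dir_deriv[of "pd f i" "x + \<sigma> *\<^sub>R ?ei" u ?ek] dg[OF inball[of \<sigma> u]] \<sigma> u
      by (simp add: pd_def)
  qed
  then obtain \<tau> where \<tau>: "0 < \<tau>" "\<tau> < t"
    and e\<tau>: "\<psi> t - \<psi> 0 = t * pd (pd f i) k (x + \<sigma> *\<^sub>R ?ei + \<tau> *\<^sub>R ?ek)" by auto
  have "dist x (x + \<sigma> *\<^sub>R ?ei + \<tau> *\<^sub>R ?ek) \<le> 2 * t"
  proof -
    have "norm (\<sigma> *\<^sub>R ?ei + \<tau> *\<^sub>R ?ek) \<le> norm (\<sigma> *\<^sub>R ?ei) + norm (\<tau> *\<^sub>R ?ek)" by (rule norm_triangle_ineq)
    also have "\<dots> = \<sigma> + \<tau>" using \<sigma> \<tau> nei by simp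
    finally show ?thesis using \<sigma> \<tau> by (simp add: dist_add_self add.assoc)
  qed
  moreover have "f (x + t *\<^sub>R ?ei + t *\<^sub>R ?ek) - f (x + t *\<^sub>R ?ei) - f (x + t *\<^sub>R ?ek) + f x
      = t * t * pd (pd f i) k (x + \<sigma> *\<^sub>R ?ei + \<tau> *\<^sub>R ?ek)"
    using e\<sigma> e\<tau> unfolding \<phi>_def \<psi>_def by (simp add: algebra_simps)
  ultimately show ?thesis by blast
qed


lemma schwarz_real:
  fixes f :: "real^'n \<Rightarrow> real"
  assumes U: "open U" "x \<in> U"
    and df: "\<And>y. y \<in> U \<Longrightarrow> f differentiable (at y)"
    and dg1: "\<And>y. y \<in> U \<Longrightarrow> (pd f i) differentiable (at y)"
    and dg2: "\<And>y. y \<in> U \<Longrightarrow> (pd f k) differentiable (at y)"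
    and c1: "continuous_on U (pd (pd f i) k)"
    and c2: "continuous_on U (pd (pd f k) i)"
  shows "pd (pd f i) k x = pd (pd f k) i x"
proof (rule ccontr)
  let ?a = "pd (pd f i) k x" and ?b = "pd (pd f k) i x"
  assume ne: "?a \<noteq> ?b"
  define e where "e = \<bar>?a - ?b\<bar> / 2"
  have e: "e > 0" using ne by (simp add: e_def)
  obtain r0 where r0: "r0 > 0" "ball x r0 \<subseteq> U" using U open_contains_ball by blast
  have "isCont (pd (pd f i) k) x" using c1 U continuous_on_eq_continuous_at by blast
  then obtain d1 where d1: "d1 > 0" "\<And>y. dist y x < d1 \<Longrightarrow> dist (pd (pd f i) k y) ?a < e"
    using e unfolding continuous_at_eps_delta by blast
  have "isCont (pd (pd f k) i) x" using c2 U continuous_on_eq_continuous_at by blast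
  then obtain d2 where d2: "d2 > 0" "\<And>y. dist y x < d2 \<Longrightarrow> dist (pd (pd f k) i y) ?b < e"
    using e unfolding continuous_at_eps_delta by blast
  define t where "t = min r0 (min d1 d2) / 4"
  have t: "0 < t" "2 * t < r0" "2 * t < d1" "2 * t < d2" using r0 d1 d2 by (auto simp: t_def)
  have sub: "\<And>y. y \<in> ball x r0 \<Longrightarrow> y \<in> U" using r0 by auto
  obtain \<xi> where \<xi>: "dist x \<xi> \<le> 2 * t"
    "f (x + t *\<^sub>R axis i 1 + t *\<^sub>R axis k 1) - f (x + t *\<^sub>R axis i 1) - f (x + t *\<^sub>R axis k 1) + f x
      = t * t * pd (pd f i) k \<xi>"
    using mixed_mvt[of x r0 f i t k] df dg1 sub t by blast
  obtain \<eta> where \<eta>: "dist x \<eta> \<le> 2 * t"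
    "f (x + t *\<^sub>R axis k 1 + t *\<^sub>R axis i 1) - f (x + t *\<^sub>R axis k 1) - f (x + t *\<^sub>R axis i 1) + f x
      = t * t * pd (pd f k) i \<eta>"
    using mixed_mvt[of x r0 f k t i] df dg2 sub t by blast
  have "t * t * pd (pd f i) k \<xi> = t * t * pd (pd f k) i \<eta>"
    using \<xi>(2) \<eta>(2) by (simp add: algebra_simps)
  then have eq: "pd (pd f i) k \<xi> = pd (pd f k) i \<eta>" using t by simp
  have "dist (pd (pd f i) k \<xi>) ?a < e" using d1(2)[of \<xi>] \<xi>(1) t by (simp add: dist_commute)
  moreover have "dist (pd (pd f k) i \<eta>) ?b < e" using d2(2)[of \<eta>] \<eta>(1) t by (simp add: dist_commute)
  ultimately have "\<bar>?a - ?b\<bar> < 2 * e" using eq by (simp add: dist_real_def)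
  then show False by (simp add: e_def)
qed


lemma pd_linear:
  assumes "bounded_linear L" "f differentiable (at x)"
  shows "pd (\<lambda>y. L (f y)) i x = L (pd f i x)"
proof -
  have "((\<lambda>y. L (f y)) has_derivative (\<lambda>h. L (frechet_derivative f (at x) h))) (at x)"
    using bounded_linear.has_derivative[OF assms(1) pd_hd[OF assms(2)]] .
  from pd_eq[OF this, of i] show ?thesis by (simp add: pd_def)
qed

lemma differentiable_local:
  assumes "open U" "x \<in> U" "\<And>y. y \<in> U \<Longrightarrow> f y = g y" "f differentiable (at x)"
  shows "g differentiable (at x)"
  using assms has_derivative_transform_within_open unfolding differentiable_def by blast

lemma schwarz:
  fixes f :: "real^'n \<Rightarrow> 'b::euclidean_space"
  assumes U: "open U" "x \<in> U" and sm: "smooth_fn U f"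
  shows "pd (pd f i) k x = pd (pd f k) i x"
proof (rule euclidean_eqI)
  fix b :: 'b assume "b \<in> Basis"
  define g where "g y = inner (f y) b" for y
  have bl: "bounded_linear (\<lambda>v::'b. inner v b)" by (rule bounded_linear_inner_left)
  have smi: "\<And>j. smooth_fn U (pd f j)" using sm smooth_pd by blast
  have smii: "\<And>j l. smooth_fn U (pd (pd f j) l)" using smi smooth_pd by blast
  have pg: "\<And>j y. y \<in> U \<Longrightarrow> pd g j y = inner (pd f j y) b"
    unfolding g_def using pd_linear[OF bl] smooth_diff[OF U(1) _ sm] by blast
  have pgg: "\<And>j l y. y \<in> U \<Longrightarrow> pd (pd g j) l y = inner (pd (pd f j) l y) b"
  proof -
    fix j l y assume y: "y \<in> U"
    have "pd (pd g j) l y = pd (\<lambda>y. inner (pd f j y) b) l y"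
      using pd_local[OF U(1) y, of "pd g j" "\<lambda>y. inner (pd f j y) b"] pg by blast
    also have "\<dots> = inner (pd (pd f j) l y) b"
      using pd_linear[OF bl smooth_diff[OF U(1) y smi]] .
    finally show "pd (pd g j) l y = inner (pd (pd f j) l y) b" .
  qed
  have "pd (pd g i) k x = pd (pd g k) i x"
  proof (rule schwarz_real[OF U])
    fix y assume y: "y \<in> U"
    show "g differentiable (at y)" unfolding g_def
      using smooth_diff[OF U(1) y sm]
      by (metis bounded_linear.has_derivative[OF bl] differentiable_def)
    show "pd g i differentiable (at y)"
      using differentiable_local[OF U(1) y, of "\<lambda>y. inner (pd f i y) b" "pd g i"] pg
        bounded_linear.has_derivative[OF bl] smooth_diff[OF U(1) y smi]
      by (metis differentiable_def)
    show "pd g k differentiable (at y)"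
      using differentiable_local[OF U(1) y, of "\<lambda>y. inner (pd f k y) b" "pd g k"] pg
        bounded_linear.has_derivative[OF bl] smooth_diff[OF U(1) y smi]
      by (metis differentiable_def)
  next
    show "continuous_on U (pd (pd g i) k)"
      using continuous_on_cong[of U U "pd (pd g i) k" "\<lambda>y. inner (pd (pd f i) k y) b"] pgg
        continuous_on_inner[OF smooth_cont[OF smii] continuous_on_const] by metis
    show "continuous_on U (pd (pd g k) i)"
      using continuous_on_cong[of U U "pd (pd g k) i" "\<lambda>y. inner (pd (pd f k) i y) b"] pgg
        continuous_on_inner[OF smooth_cont[OF smii] continuous_on_const] by metis
  qed
  then show "inner (pd (pd f i) k x) b = inner (pd (pd f k) i x) b"
    using pgg[OF U(2)] by metis
qed


lemma differentiable_prod':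
  fixes f :: "'i \<Rightarrow> 'a::real_normed_vector \<Rightarrow> real"
  assumes "finite I" "\<And>i. i \<in> I \<Longrightarrow> f i differentiable (at x)"
  shows "(\<lambda>x. \<Prod>i\<in>I. f i x) differentiable (at x)"
  using assms
proof (induction I rule: finite_induct)
  case empty then show ?case by simp
next
  case (insert a I)
  then show ?case by (auto intro!: differentiable_mult)
qed

lemma det_differentiable:
  fixes M :: "'a::real_normed_vector \<Rightarrow> real^'n^'n"
  assumes "\<And>i j. (\<lambda>x. M x $ i $ j) differentiable (at x)"
  shows "(\<lambda>x. det (M x)) differentiable (at x)"
  unfolding det_def
  by (auto intro!: differentiable_sum differentiable_mult differentiable_prod' assms)

lemma metric_invertible:
  assumes "riem_metric U G" "y \<in> U"
  shows "invertible (\<chi> a b. G y a b)"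
proof -
  let ?M = "(\<chi> a b. G y a b)"
  have "\<forall>v. ?M *v v = 0 \<longrightarrow> v = 0"
  proof (intro allI impI, rule ccontr)
    fix v :: "real^'a" assume mv: "?M *v v = 0" and nz: "v \<noteq> 0"
    have pos: "(\<Sum>i\<in>UNIV. \<Sum>j\<in>UNIV. G y i j * v$i * v$j) > 0"
      using assms nz unfolding riem_metric_def by blast
    have "\<And>i. (\<Sum>j\<in>UNIV. G y i j * v$j) = 0"
      using mv by (simp add: matrix_vector_mult_def vec_eq_iff)
    then have "(\<Sum>i\<in>UNIV. \<Sum>j\<in>UNIV. G y i j * v$i * v$j) = 0"
      by (simp add: sum_distrib_left[symmetric] mult.commute mult.left_commute)
    then show False using pos by simp
  qed
  then show ?thesis using matrix_left_invertible_ker invertible_left_inverse by blast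
qed

lemma inv_props:
  assumes "invertible (A::real^'n^'n)"
  shows "A ** matrix_inv A = mat 1" "matrix_inv A ** A = mat 1"
proof -
  have "\<exists>A'. A ** A' = mat 1 \<and> A' ** A = mat 1" using assms invertible_def by blast
  then have "A ** matrix_inv A = mat 1 \<and> matrix_inv A ** A = mat 1"
    unfolding matrix_inv_def by (rule someI_ex)
  then show "A ** matrix_inv A = mat 1" "matrix_inv A ** A = mat 1" by auto
qed

lemma Ginv_props:
  assumes "riem_metric U G" "y \<in> U"
  shows "\<And>a c. (\<Sum>b\<in>UNIV. G y a b * Ginv G y b c) = (if a = c then 1 else 0)"
    and "\<And>a c. (\<Sum>b\<in>UNIV. Ginv G y a b * G y b c) = (if a = c then 1 else 0)"
    and "\<And>a c. Ginv G y a c = Ginv G y c a"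
proof -
  let ?M = "(\<chi> a b. G y a b)"
  have inv: "invertible ?M" using metric_invertible[OF assms] .
  note ip = inv_props[OF inv]
  show "\<And>a c. (\<Sum>b\<in>UNIV. G y a b * Ginv G y b c) = (if a = c then 1 else 0)"
    using ip(1) by (simp add: Ginv_def matrix_matrix_mult_def vec_eq_iff mat_def)
  show "\<And>a c. (\<Sum>b\<in>UNIV. Ginv G y a b * G y b c) = (if a = c then 1 else 0)"
    using ip(2) by (simp add: Ginv_def matrix_matrix_mult_def vec_eq_iff mat_def)
  have sym: "transpose ?M = ?M"
    using assms unfolding riem_metric_def by (simp add: transpose_def vec_eq_iff)
  have "transpose (matrix_inv ?M) ** ?M = mat 1"
    using ip(1) matrix_transpose_mul[of ?M "matrix_inv ?M"] sym by simp
  then have "transpose (matrix_inv ?M) = matrix_inv ?M"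
    by (metis ip(1) matrix_mul_assoc matrix_mul_lid matrix_mul_rid)
  then show "\<And>a c. Ginv G y a c = Ginv G y c a"
    unfolding Ginv_def by (metis transpose_def vec_lambda_beta)
qed

lemma matrix_inv_cramer:
  fixes A :: "real^'n^'n"
  assumes "invertible A"
  shows "matrix_inv A $ b $ c = det (\<chi> i j. if j = b then axis c 1 $ i else A $ i $ j) / det A"
proof -
  have d: "det A \<noteq> 0" using assms invertible_det_nz by blast
  have "A *v (matrix_inv A *v axis c 1) = axis c 1"
    using inv_props(1)[OF assms] by (simp add: matrix_vector_mul_assoc)
  then have "matrix_inv A *v axis c 1 = (\<chi> k. det (\<chi> i j. if j = k then axis c 1 $ i else A $ i $ j) / det A)"
    using cramer[OF d] by blast
  moreover have "(matrix_inv A *v axis c 1) $ b = matrix_inv A $ b $ c"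
  proof -
    have "\<And>j. matrix_inv A $ b $ j * (if j = c then 1 else 0) = (if j = c then matrix_inv A $ b $ c else 0)" by simp
    then show ?thesis by (simp add: matrix_vector_mult_def axis_def)
  qed
  ultimately show ?thesis by simp
qed

lemma Ginv_differentiable:
  assumes U: "open U" "x \<in> U" and rm: "riem_metric U G"
  shows "(\<lambda>y. Ginv G y b c) differentiable (at x)"
proof -
  have smG: "\<And>i j. smooth_fn U (\<lambda>y. G y i j)" using rm unfolding riem_metric_def by blast
  have dG: "\<And>i j. (\<lambda>y. G y i j) differentiable (at x)" using smooth_diff[OF U smG] .
  have eq: "det (\<chi> i j. if j = b then axis c 1 $ i else G y i j) / det (\<chi> a b. G y a b) = Ginv G y b c" if y: "y \<in> U" for y
  proof -
    have "Ginv G y b c = det (\<chi> i j. if j = b then axis c 1 $ i else (\<chi> a b. G y a b) $ i $ j) / det (\<chi> a b. G y a b)"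
      unfolding Ginv_def by (rule matrix_inv_cramer[OF metric_invertible[OF rm y]])
    moreover have "(\<chi> i j. if j = b then axis c 1 $ i else (\<chi> a b. G y a b) $ i $ j) = (\<chi> i j. if j = b then axis c 1 $ i else G y i j)"
      by (simp add: vec_eq_iff)
    ultimately show ?thesis by simp
  qed
  have d0: "det (\<chi> a b. G x a b) \<noteq> 0" using metric_invertible[OF rm U(2)] invertible_det_nz by blast
  have "(\<lambda>y. det (\<chi> i j. if j = b then axis c 1 $ i else G y i j) / det (\<chi> a b. G y a b)) differentiable (at x)"
    proof (intro differentiable_divide det_differentiable d0)
    fix i j show "(\<lambda>y. (\<chi> i j. if j = b then axis c 1 $ i else G y i j) $ i $ j) differentiable (at x)"
      by (cases "j = b") (auto simp: dG)
  qed (auto simp: dG)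
  then show ?thesis using differentiable_local[OF U, of "\<lambda>y. det (\<chi> i j. if j = b then axis c 1 $ i else G y i j) / det (\<chi> a b. G y a b)" "\<lambda>y. Ginv G y b c"] eq by blast
qed


lemma mm_add_rdistrib: "((A::'a::semiring_1^'n^'m) + B) ** C = A ** C + B ** C"
  by (vector matrix_matrix_mult_def sum.distrib[symmetric] field_simps)

lemma bb_mmult: "bounded_bilinear (\<lambda>(X::complex^'r^'r) (Y::complex^'r^'r). X ** Y)"
proof -
  have l1: "linear (\<lambda>Y. X ** Y)" for X :: "complex^'r^'r"
    by (rule linearI) (simp_all add: matrix_add_ldistrib matrix_scalar_ac scalar_matrix_assoc)
  have l2: "linear (\<lambda>X. X ** Y)" for Y :: "complex^'r^'r"
    by (rule linearI) (simp_all add: mm_add_rdistrib scalar_matrix_assoc)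
  have "bilinear (\<lambda>(X::complex^'r^'r) (Y::complex^'r^'r). X ** Y)"
    unfolding bilinear_def by (intro conjI allI l1 l2)
  then show ?thesis using bilinear_conv_bounded_bilinear by blast
qed

lemma pd_bb:
  fixes f :: "real^'n \<Rightarrow> 'a::real_normed_vector" and g :: "real^'n \<Rightarrow> 'b::real_normed_vector"
    and pr :: "'a \<Rightarrow> 'b \<Rightarrow> 'c::real_normed_vector"
  assumes bb: "bounded_bilinear pr" and f: "f differentiable (at x)" and g: "g differentiable (at x)"
  shows "pd (\<lambda>y. pr (f y) (g y)) i x = pr (f x) (pd g i x) + pr (pd f i x) (g x)"
proof -
  have "((\<lambda>y. pr (f y) (g y)) has_derivative
     (\<lambda>h. pr (f x) (frechet_derivative g (at x) h) + pr (frechet_derivative f (at x) h) (g x))) (at x)"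
    using bounded_bilinear.FDERIV[OF bb pd_hd[OF f] pd_hd[OF g]] .
  from pd_eq[OF this, of i] show ?thesis by (simp add: pd_def)
qed

lemma diff_bb:
  fixes f :: "real^'n \<Rightarrow> 'a::real_normed_vector" and g :: "real^'n \<Rightarrow> 'b::real_normed_vector"
    and pr :: "'a \<Rightarrow> 'b \<Rightarrow> 'c::real_normed_vector"
  assumes bb: "bounded_bilinear pr" and f: "f differentiable (at x)" and g: "g differentiable (at x)"
  shows "(\<lambda>y. pr (f y) (g y)) differentiable (at x)"
  using bounded_bilinear.FDERIV[OF bb pd_hd[OF f] pd_hd[OF g]] differentiable_def by blast

lemma pd_add:
  assumes "f differentiable (at x)" "g differentiable (at x)"
  shows "pd (\<lambda>y. f y + g y) i x = pd f i x + pd g i x"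
proof -
  have "((\<lambda>y. f y + g y) has_derivative (\<lambda>h. frechet_derivative f (at x) h + frechet_derivative g (at x) h)) (at x)"
    using has_derivative_add[OF pd_hd[OF assms(1)] pd_hd[OF assms(2)]] .
  from pd_eq[OF this, of i] show ?thesis by (simp add: pd_def)
qed

lemma pd_diff:
  assumes "f differentiable (at x)" "g differentiable (at x)"
  shows "pd (\<lambda>y. f y - g y) i x = pd f i x - pd g i x"
proof -
  have "((\<lambda>y. f y - g y) has_derivative (\<lambda>h. frechet_derivative f (at x) h - frechet_derivative g (at x) h)) (at x)"
    using has_derivative_diff[OF pd_hd[OF assms(1)] pd_hd[OF assms(2)]] .
  from pd_eq[OF this, of i] show ?thesis by (simp add: pd_def)
qed

lemma pd_sum:
  assumes "\<And>a. a \<in> I \<Longrightarrow> f a differentiable (at x)"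
  shows "pd (\<lambda>y. \<Sum>a\<in>I. f a y) i x = (\<Sum>a\<in>I. pd (f a) i x)"
proof -
  have "((\<lambda>y. \<Sum>a\<in>I. f a y) has_derivative (\<lambda>h. \<Sum>a\<in>I. frechet_derivative (f a) (at x) h)) (at x)"
    using has_derivative_sum[of I f, OF pd_hd[OF assms]] by blast
  from pd_eq[OF this, of i] show ?thesis by (simp add: pd_def)
qed

lemma pd_const: "pd (\<lambda>y. c) i x = 0"
  unfolding pd_def by simp

lemma pd_scaleR:
  assumes "f differentiable (at x)" "g differentiable (at x)"
  shows "pd (\<lambda>y. f y *\<^sub>R g y) i x = f x *\<^sub>R pd g i x + pd f i x *\<^sub>R g x"
  using pd_bb[OF bounded_bilinear_scaleR assms] .

lemma pd_mult:
  fixes f g :: "real^'n \<Rightarrow> real"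
  assumes "f differentiable (at x)" "g differentiable (at x)"
  shows "pd (\<lambda>y. f y * g y) i x = f x * pd g i x + pd f i x * g x"
  using pd_bb[OF bounded_bilinear_mult assms] .

lemma pd_mm:
  fixes f g :: "real^'n \<Rightarrow> complex^'r^'r"
  assumes "f differentiable (at x)" "g differentiable (at x)"
  shows "pd (\<lambda>y. f y ** g y) i x = f x ** pd g i x + pd f i x ** g x"
  using pd_bb[OF bb_mmult assms] .

lemma diff_mm:
  fixes f g :: "real^'n \<Rightarrow> complex^'r^'r"
  assumes "f differentiable (at x)" "g differentiable (at x)"
  shows "(\<lambda>y. f y ** g y) differentiable (at x)"
  using diff_bb[OF bb_mmult assms] .

lemma pd_exp:
  fixes f :: "real^'n \<Rightarrow> real"
  assumes "f differentiable (at x)"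
  shows "pd (\<lambda>y. exp (f y)) i x = exp (f x) * pd f i x"
proof -
  have "((\<lambda>y. exp (f y)) has_derivative (\<lambda>h. frechet_derivative f (at x) h * exp (f x))) (at x)"
    using has_derivative_exp[OF pd_hd[OF assms]] .
  from pd_eq[OF this, of i] show ?thesis by (simp add: pd_def mult.commute)
qed

lemma pd_neg:
  assumes "f differentiable (at x)"
  shows "pd (\<lambda>y. - f y) i x = - pd f i x"
  using pd_diff[OF differentiable_const assms, of 0 i] pd_const by simp


lemma delta_l: "(\<Sum>k\<in>(UNIV::'n::finite set). (if j = k then c else 0) * (f k::real)) = c * f j"
proof -
  have "\<And>k. (if j = k then c else 0) * f k = (if j = k then c * f j else 0)" by auto
  then show ?thesis by simp
qed
lemma delta_r: "(\<Sum>k\<in>(UNIV::'n::finite set). (if k = j then c else 0) * (f k::real)) = c * f j"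
proof -
  have "\<And>k. (if k = j then c else 0) * f k = (if k = j then c * f j else 0)" by auto
  then show ?thesis by simp
qed
lemma deltaR_l: "(\<Sum>k\<in>(UNIV::'n::finite set). (if j = k then c else 0) *\<^sub>R (f k::'v::real_vector)) = c *\<^sub>R f j"
proof -
  have "\<And>k. (if j = k then c else 0) *\<^sub>R f k = (if j = k then c *\<^sub>R f j else 0)" by auto
  then show ?thesis by simp
qed
lemma deltaR_r: "(\<Sum>k\<in>(UNIV::'n::finite set). (if k = j then c else 0) *\<^sub>R (f k::'v::real_vector)) = c *\<^sub>R f j"
proof -
  have "\<And>k. (if k = j then c else 0) *\<^sub>R f k = (if k = j then c *\<^sub>R f j else 0)" by auto
  then show ?thesis by simp
qed

lemma deltaR_r2: "(\<Sum>k\<in>(UNIV::'n::finite set). (c * (if k = j then d else 0)) *\<^sub>R (f k::'v::real_vector)) = (c * d) *\<^sub>R f j"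
proof -
  have "\<And>k. (c * (if k = j then d else 0)) *\<^sub>R f k = (if k = j then (c * d) *\<^sub>R f j else 0)" by auto
  then show ?thesis by simp
qed

lemma sum_rot3: "(\<Sum>i\<in>A. \<Sum>a\<in>B. \<Sum>b\<in>C. f i a b) = (\<Sum>a\<in>B. \<Sum>b\<in>C. \<Sum>i\<in>A. (f i a b::'a::comm_monoid_add))"
  by (subst sum.swap, rule sum.cong[OF refl], rule sum.swap)

lemma sum_swap22: "(\<Sum>k\<in>A. \<Sum>l\<in>B. \<Sum>a\<in>C. \<Sum>b\<in>D. f k l a b) = (\<Sum>a\<in>C. \<Sum>b\<in>D. \<Sum>k\<in>A. \<Sum>l\<in>B. (f k l a b::'a::comm_monoid_add))"
proof -
  have "(\<Sum>k\<in>A. \<Sum>l\<in>B. \<Sum>a\<in>C. \<Sum>b\<in>D. f k l a b) = (\<Sum>k\<in>A. \<Sum>a\<in>C. \<Sum>b\<in>D. \<Sum>l\<in>B. f k l a b)"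
    by (rule sum.cong[OF refl], rule sum_rot3)
  also have "\<dots> = (\<Sum>a\<in>C. \<Sum>b\<in>D. \<Sum>k\<in>A. \<Sum>l\<in>B. f k l a b)"
    by (rule sum_rot3)
  finally show ?thesis .
qed

lemma self_neg_zero: "x = - x \<Longrightarrow> (x::'v::real_vector) = 0"
proof -
  assume "x = - x"
  then have "x + x = 0" by (metis add.right_inverse)
  then have "2 *\<^sub>R x = 0" by (simp add: scaleR_2)
  then show "x = 0" by simp
qed

lemma alg_main:
  fixes J gi Om :: "'n::finite \<Rightarrow> 'n \<Rightarrow> real"
    and H Hu :: "'n \<Rightarrow> 'n \<Rightarrow> 'n \<Rightarrow> real"
    and F :: "'n \<Rightarrow> 'n \<Rightarrow> 'v::real_vector"
    and N :: "'n \<Rightarrow> 'n \<Rightarrow> 'n \<Rightarrow> 'v"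
    and th :: "'n \<Rightarrow> real"
  assumes hOm: "\<And>j k. Om j k = (\<Sum>b\<in>UNIV. J j b * gi b k)"
    and hHu: "\<And>l a b. Hu l a b = (\<Sum>m\<in>UNIV. gi l m * H m a b)"
    and hJJ: "\<And>k j. (\<Sum>l\<in>UNIV. J k l * J l j) = (if k = j then -1 else 0)"
    and hgs: "\<And>a b. gi a b = gi b a"
    and hJg: "\<And>a b. (\<Sum>k\<in>UNIV. J b k * gi k a) = - (\<Sum>k\<in>UNIV. J a k * gi k b)"
    and hH1: "\<And>a b c. H a b c = - H b a c"
    and hH2: "\<And>a b c. H a b c = - H a c b"
    and hFa: "\<And>a b. F a b = - F b a"
    and hF11: "\<And>i j. F i j = (\<Sum>a\<in>UNIV. \<Sum>b\<in>UNIV. (J a i * J b j) *\<^sub>R F a b)"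
    and hN11: "\<And>k i j. N k i j = (\<Sum>a\<in>UNIV. \<Sum>b\<in>UNIV. (J a i * J b j) *\<^sub>R N k a b)"
    and hNa: "\<And>k i j. N k i j = - N k j i"
    and hT: "\<And>i. (\<Sum>j\<in>UNIV. \<Sum>k\<in>UNIV. Om j k *\<^sub>R N i j k) = 0"
    and hB: "\<And>k i j. N k i j + N i j k + N j k i =
        - (\<Sum>l\<in>UNIV. Hu l k i *\<^sub>R F l j + Hu l j k *\<^sub>R F l i + Hu l i j *\<^sub>R F l k)"
    and hth: "\<And>i. th i = 1/2 * (\<Sum>j\<in>UNIV. \<Sum>k\<in>UNIV. \<Sum>l\<in>UNIV. J j i * H j k l * Om k l)"
  shows "(\<Sum>i\<in>UNIV. \<Sum>k\<in>UNIV. gi i k *\<^sub>R N k i j) = (\<Sum>i\<in>UNIV. \<Sum>k\<in>UNIV. (gi i k * th k) *\<^sub>R F i j)"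
proof -
  have L1: "(\<Sum>k\<in>UNIV. Om j k * J a k) = gi j a" for j a
  proof -
    have "(\<Sum>k\<in>UNIV. Om j k * J a k) = (\<Sum>k\<in>UNIV. \<Sum>b\<in>UNIV. J j b * (J a k * gi b k))"
      by (simp add: hOm sum_distrib_right sum_distrib_left mult_ac)
    also have "\<dots> = (\<Sum>b\<in>UNIV. J j b * (\<Sum>k\<in>UNIV. J a k * gi k b))"
      by (subst sum.swap) (simp add: sum_distrib_left hgs)
    also have "\<dots> = (\<Sum>b\<in>UNIV. J j b * (- (\<Sum>k\<in>UNIV. J b k * gi k a)))"
      by (rule sum.cong[OF refl], subst hJg, rule refl)
    also have "\<dots> = - (\<Sum>b\<in>UNIV. \<Sum>k\<in>UNIV. J j b * J b k * gi k a)"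
      by (simp add: sum_distrib_left sum_negf mult.assoc)
    also have "\<dots> = - (\<Sum>k\<in>UNIV. \<Sum>b\<in>UNIV. J j b * J b k * gi k a)"
      by (subst sum.swap) (rule refl)
    also have "\<dots> = - (\<Sum>k\<in>UNIV. (\<Sum>b\<in>UNIV. J j b * J b k) * gi k a)"
      by (simp add: sum_distrib_right)
    also have "\<dots> = gi j a" by (simp add: hJJ delta_l)
    finally show ?thesis .
  qed
  have L2: "(\<Sum>j\<in>UNIV. Om j k * J c j) = - gi k c" for k c
  proof -
    have "(\<Sum>j\<in>UNIV. Om j k * J c j) = (\<Sum>j\<in>UNIV. \<Sum>b\<in>UNIV. (J c j * J j b) * gi b k)"
      by (simp add: hOm sum_distrib_right sum_distrib_left mult_ac)
    also have "\<dots> = (\<Sum>b\<in>UNIV. (\<Sum>j\<in>UNIV. J c j * J j b) * gi b k)"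
      by (subst sum.swap) (simp add: sum_distrib_right)
    also have "\<dots> = - gi c k" by (simp add: hJJ delta_l)
    finally show ?thesis using hgs[of c k] by simp
  qed
  have L3: "Om a b = - Om b a" for a b
    using hJg[of b a] by (simp add: hOm)
  have L4: "(\<Sum>i\<in>UNIV. J i j *\<^sub>R F l i) = (\<Sum>i\<in>UNIV. J i l *\<^sub>R F j i)" for j l
  proof -
    have "(\<Sum>i\<in>UNIV. J i j *\<^sub>R F l i) = (\<Sum>i\<in>UNIV. \<Sum>a\<in>UNIV. \<Sum>b\<in>UNIV. (J a l * (J b i * J i j)) *\<^sub>R F a b)"
      by (subst hF11) (simp add: scaleR_sum_right mult_ac)
    also have "\<dots> = (\<Sum>a\<in>UNIV. \<Sum>b\<in>UNIV. \<Sum>i\<in>UNIV. (J a l * (J b i * J i j)) *\<^sub>R F a b)"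
      by (rule sum_rot3)
    also have "\<dots> = (\<Sum>a\<in>UNIV. \<Sum>b\<in>UNIV. (J a l * (\<Sum>i\<in>UNIV. J b i * J i j)) *\<^sub>R F a b)"
      by (simp add: scaleR_sum_left sum_distrib_left)
    also have "\<dots> = (\<Sum>a\<in>UNIV. - (J a l *\<^sub>R F a j))"
      by (simp add: hJJ deltaR_r2)
    also have "\<dots> = (\<Sum>a\<in>UNIV. J a l *\<^sub>R F j a)"
      by (rule sum.cong) (auto simp: hFa[of _ j])
    finally show ?thesis .
  qed
  define V where "V c = (\<Sum>j\<in>UNIV. \<Sum>a\<in>UNIV. gi j a *\<^sub>R N j a c)" for c
  have S3: "(\<Sum>j\<in>UNIV. \<Sum>k\<in>UNIV. Om j k *\<^sub>R N j k i) = (\<Sum>c\<in>UNIV. J c i *\<^sub>R V c)" for i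
  proof -
    have "(\<Sum>j\<in>UNIV. \<Sum>k\<in>UNIV. Om j k *\<^sub>R N j k i)
        = (\<Sum>j\<in>UNIV. \<Sum>k\<in>UNIV. \<Sum>a\<in>UNIV. \<Sum>c\<in>UNIV. (Om j k * (J a k * J c i)) *\<^sub>R N j a c)"
      by (intro sum.cong refl, subst hN11) (simp add: scaleR_sum_right)
    also have "\<dots> = (\<Sum>j\<in>UNIV. \<Sum>a\<in>UNIV. \<Sum>c\<in>UNIV. \<Sum>k\<in>UNIV. (Om j k * (J a k * J c i)) *\<^sub>R N j a c)"
      by (rule sum.cong[OF refl], rule sum_rot3)
    also have "\<dots> = (\<Sum>j\<in>UNIV. \<Sum>a\<in>UNIV. \<Sum>c\<in>UNIV. ((\<Sum>k\<in>UNIV. Om j k * J a k) * J c i) *\<^sub>R N j a c)"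
      by (simp add: scaleR_sum_left sum_distrib_right mult.assoc)
    also have "\<dots> = (\<Sum>j\<in>UNIV. \<Sum>a\<in>UNIV. \<Sum>c\<in>UNIV. (gi j a * J c i) *\<^sub>R N j a c)"
      by (simp add: L1)
    also have "\<dots> = (\<Sum>c\<in>UNIV. \<Sum>j\<in>UNIV. \<Sum>a\<in>UNIV. (gi j a * J c i) *\<^sub>R N j a c)"
      by (rule sum_rot3[symmetric])
    also have "\<dots> = (\<Sum>c\<in>UNIV. J c i *\<^sub>R V c)"
      by (simp add: V_def scaleR_sum_right mult.commute)
    finally show ?thesis .
  qed
  have S4: "(\<Sum>j\<in>UNIV. \<Sum>k\<in>UNIV. Om j k *\<^sub>R N k i j) = (\<Sum>c\<in>UNIV. J c i *\<^sub>R V c)" for i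
  proof -
    have "(\<Sum>j\<in>UNIV. \<Sum>k\<in>UNIV. Om j k *\<^sub>R N k i j)
        = (\<Sum>j\<in>UNIV. \<Sum>k\<in>UNIV. \<Sum>a\<in>UNIV. \<Sum>c\<in>UNIV. (Om j k * (J a i * J c j)) *\<^sub>R N k a c)"
      by (intro sum.cong refl, subst hN11) (simp add: scaleR_sum_right)
    also have "\<dots> = (\<Sum>k\<in>UNIV. \<Sum>j\<in>UNIV. \<Sum>a\<in>UNIV. \<Sum>c\<in>UNIV. (Om j k * (J a i * J c j)) *\<^sub>R N k a c)"
      by (rule sum.swap)
    also have "\<dots> = (\<Sum>k\<in>UNIV. \<Sum>a\<in>UNIV. \<Sum>c\<in>UNIV. \<Sum>j\<in>UNIV. (Om j k * (J a i * J c j)) *\<^sub>R N k a c)"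
      by (rule sum.cong[OF refl], rule sum_rot3)
    also have "\<dots> = (\<Sum>k\<in>UNIV. \<Sum>a\<in>UNIV. \<Sum>c\<in>UNIV. ((\<Sum>j\<in>UNIV. Om j k * J c j) * J a i) *\<^sub>R N k a c)"
      by (simp add: scaleR_sum_left sum_distrib_right sum_distrib_left mult_ac)
    also have "\<dots> = (\<Sum>k\<in>UNIV. \<Sum>a\<in>UNIV. \<Sum>c\<in>UNIV. (gi k c * J a i) *\<^sub>R N k c a)"
      apply (intro sum.cong refl)
      subgoal for k a c using hNa[of k a c] by (simp add: L2)
      done
    also have "\<dots> = (\<Sum>a\<in>UNIV. \<Sum>k\<in>UNIV. \<Sum>c\<in>UNIV. (gi k c * J a i) *\<^sub>R N k c a)"
      by (rule sum.swap)
    also have "\<dots> = (\<Sum>c\<in>UNIV. J c i *\<^sub>R V c)"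
      by (simp add: V_def scaleR_sum_right mult.commute)
    finally show ?thesis .
  qed
  define P1 where "P1 i = (\<Sum>j\<in>UNIV. \<Sum>k\<in>UNIV. Om j k *\<^sub>R (\<Sum>l\<in>UNIV. Hu l i j *\<^sub>R F l k))" for i
  define P2 where "P2 i = (\<Sum>j\<in>UNIV. \<Sum>k\<in>UNIV. Om j k *\<^sub>R (\<Sum>l\<in>UNIV. Hu l k i *\<^sub>R F l j))" for i
  define R where "R i = (\<Sum>j\<in>UNIV. \<Sum>k\<in>UNIV. Om j k *\<^sub>R (\<Sum>l\<in>UNIV. Hu l j k *\<^sub>R F l i))" for i
  have S5: "2 *\<^sub>R (\<Sum>c\<in>UNIV. J c i *\<^sub>R V c) = - (P1 i + P2 i + R i)" for i
  proof -
    have "(\<Sum>j\<in>UNIV. \<Sum>k\<in>UNIV. Om j k *\<^sub>R (N i j k + N j k i + N k i j))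
        = (\<Sum>j\<in>UNIV. \<Sum>k\<in>UNIV. Om j k *\<^sub>R N i j k) + (\<Sum>j\<in>UNIV. \<Sum>k\<in>UNIV. Om j k *\<^sub>R N j k i)
          + (\<Sum>j\<in>UNIV. \<Sum>k\<in>UNIV. Om j k *\<^sub>R N k i j)"
      by (simp add: scaleR_right_distrib sum.distrib)
    also have "\<dots> = 2 *\<^sub>R (\<Sum>c\<in>UNIV. J c i *\<^sub>R V c)"
      by (simp add: hT S3 S4 scaleR_2)
    finally have e1: "(\<Sum>j\<in>UNIV. \<Sum>k\<in>UNIV. Om j k *\<^sub>R (N i j k + N j k i + N k i j)) = 2 *\<^sub>R (\<Sum>c\<in>UNIV. J c i *\<^sub>R V c)" .
    have "(\<Sum>j\<in>UNIV. \<Sum>k\<in>UNIV. Om j k *\<^sub>R (N i j k + N j k i + N k i j))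
        = (\<Sum>j\<in>UNIV. \<Sum>k\<in>UNIV. Om j k *\<^sub>R (- (\<Sum>l\<in>UNIV. Hu l i j *\<^sub>R F l k + Hu l k i *\<^sub>R F l j + Hu l j k *\<^sub>R F l i)))"
      by (intro sum.cong refl, subst hB) (rule refl)
    also have "\<dots> = - (P1 i + P2 i + R i)"
      by (simp add: P1_def P2_def R_def scaleR_right_distrib scaleR_right_diff_distrib sum_subtractf sum.distrib sum_negf)
    finally show ?thesis using e1 by simp
  qed
  have HuA: "Hu l a b = - Hu l b a" for l a b
    by (simp add: hHu sum_negf[symmetric] hH2[of _ a b])
  have P2P1: "P2 i = P1 i" for i
  proof -
    have "P2 i = (\<Sum>k\<in>UNIV. \<Sum>j\<in>UNIV. Om j k *\<^sub>R (\<Sum>l\<in>UNIV. Hu l k i *\<^sub>R F l j))"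
      unfolding P2_def by (rule sum.swap)
    also have "\<dots> = P1 i" unfolding P1_def
      apply (intro sum.cong refl)
      subgoal for k j using L3[of j k] HuA[of _ k i] by (simp add: scaleR_sum_right)
      done
    finally show ?thesis .
  qed
  define Q where "Q j m = (\<Sum>k\<in>UNIV. \<Sum>l\<in>UNIV. (Om j k * gi l m) *\<^sub>R F l k)" for j m
  have Qform: "Q j m = (\<Sum>a\<in>UNIV. \<Sum>b\<in>UNIV. (gi j b * Om a m) *\<^sub>R F a b)" for j m
  proof -
    have "Q j m = (\<Sum>k\<in>UNIV. \<Sum>l\<in>UNIV. \<Sum>a\<in>UNIV. \<Sum>b\<in>UNIV. ((Om j k * gi l m) * (J a l * J b k)) *\<^sub>R F a b)"
      unfolding Q_def by (intro sum.cong refl, subst hF11) (simp add: scaleR_sum_right)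
    also have "\<dots> = (\<Sum>a\<in>UNIV. \<Sum>b\<in>UNIV. \<Sum>k\<in>UNIV. \<Sum>l\<in>UNIV. ((Om j k * gi l m) * (J a l * J b k)) *\<^sub>R F a b)"
      by (rule sum_swap22)
    also have "\<dots> = (\<Sum>a\<in>UNIV. \<Sum>b\<in>UNIV. ((\<Sum>k\<in>UNIV. Om j k * J b k) * (\<Sum>l\<in>UNIV. J a l * gi l m)) *\<^sub>R F a b)"
      by (simp add: scaleR_sum_left sum_distrib_right sum_distrib_left mult_ac)
    also have "\<dots> = (\<Sum>a\<in>UNIV. \<Sum>b\<in>UNIV. (gi j b * Om a m) *\<^sub>R F a b)"
      by (simp add: L1 flip: hOm)
    finally show ?thesis .
  qed
  have Qsym: "Q m j = Q j m" for j m
  proof -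
    have "Q m j = (\<Sum>k\<in>UNIV. \<Sum>l\<in>UNIV. (gi j l * Om k m) *\<^sub>R F k l)"
      unfolding Q_def
      apply (intro sum.cong refl)
      subgoal for k l using L3[of m k] hFa[of l k] hgs[of l j] by simp
      done
    then show ?thesis using Qform by simp
  qed
  have HA: "H j i m = - H m i j" for j i m
    using hH1[of j i m] hH2[of i j m] hH1[of i m j] by simp
  have P1z: "P1 i = 0" for i
  proof -
    have "P1 i = (\<Sum>j\<in>UNIV. \<Sum>k\<in>UNIV. \<Sum>l\<in>UNIV. \<Sum>m\<in>UNIV. H m i j *\<^sub>R ((Om j k * gi l m) *\<^sub>R F l k))"
      unfolding P1_def hHu by (simp add: scaleR_sum_right scaleR_sum_left mult_ac)
    also have "\<dots> = (\<Sum>j\<in>UNIV. \<Sum>m\<in>UNIV. \<Sum>k\<in>UNIV. \<Sum>l\<in>UNIV. H m i j *\<^sub>R ((Om j k * gi l m) *\<^sub>R F l k))"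
      by (rule sum.cong[OF refl], rule sum_rot3[symmetric])
    also have "\<dots> = (\<Sum>j\<in>UNIV. \<Sum>m\<in>UNIV. H m i j *\<^sub>R Q j m)"
      by (simp add: Q_def scaleR_sum_right)
    finally have e1: "P1 i = (\<Sum>j\<in>UNIV. \<Sum>m\<in>UNIV. H m i j *\<^sub>R Q j m)" .
    have "(\<Sum>j\<in>UNIV. \<Sum>m\<in>UNIV. H m i j *\<^sub>R Q j m) = (\<Sum>m\<in>UNIV. \<Sum>j\<in>UNIV. H m i j *\<^sub>R Q j m)"
      by (rule sum.swap)
    also have "\<dots> = (\<Sum>m\<in>UNIV. \<Sum>j\<in>UNIV. - (H j i m *\<^sub>R Q m j))"
      apply (intro sum.cong refl)
      subgoal for m j using HA[of j i m] Qsym[of j m] by simp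
      done
    finally have "(\<Sum>j\<in>UNIV. \<Sum>m\<in>UNIV. H m i j *\<^sub>R Q j m) = - (\<Sum>j\<in>UNIV. \<Sum>m\<in>UNIV. H m i j *\<^sub>R Q j m)"
      by (simp add: sum_negf)
    then have "(\<Sum>j\<in>UNIV. \<Sum>m\<in>UNIV. H m i j *\<^sub>R Q j m) = 0"
      by (rule self_neg_zero)
    then show ?thesis using e1 by simp
  qed
  define w where "w m = (\<Sum>j\<in>UNIV. \<Sum>k\<in>UNIV. Om j k * H m j k)" for m
  have inner: "(\<Sum>j\<in>UNIV. \<Sum>k\<in>UNIV. Om j k * Hu l j k) = (\<Sum>m\<in>UNIV. gi l m * w m)" for l
  proof -
    have "(\<Sum>j\<in>UNIV. \<Sum>k\<in>UNIV. Om j k * Hu l j k) = (\<Sum>j\<in>UNIV. \<Sum>k\<in>UNIV. \<Sum>m\<in>UNIV. gi l m * (Om j k * H m j k))"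
      by (simp add: hHu sum_distrib_left mult_ac)
    also have "\<dots> = (\<Sum>m\<in>UNIV. \<Sum>j\<in>UNIV. \<Sum>k\<in>UNIV. gi l m * (Om j k * H m j k))"
      by (rule sum_rot3[symmetric])
    also have "\<dots> = (\<Sum>m\<in>UNIV. gi l m * w m)"
      by (simp add: w_def sum_distrib_left)
    finally show ?thesis .
  qed
  have Rform: "R i = (\<Sum>l\<in>UNIV. (\<Sum>m\<in>UNIV. gi l m * w m) *\<^sub>R F l i)" for i
  proof -
    have "R i = (\<Sum>j\<in>UNIV. \<Sum>k\<in>UNIV. \<Sum>l\<in>UNIV. (Om j k * Hu l j k) *\<^sub>R F l i)"
      unfolding R_def by (simp add: scaleR_sum_right)
    also have "\<dots> = (\<Sum>l\<in>UNIV. \<Sum>j\<in>UNIV. \<Sum>k\<in>UNIV. (Om j k * Hu l j k) *\<^sub>R F l i)"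
      by (rule sum_rot3[symmetric])
    also have "\<dots> = (\<Sum>l\<in>UNIV. (\<Sum>j\<in>UNIV. \<Sum>k\<in>UNIV. Om j k * Hu l j k) *\<^sub>R F l i)"
      by (simp add: scaleR_sum_left)
    also have "\<dots> = (\<Sum>l\<in>UNIV. (\<Sum>m\<in>UNIV. gi l m * w m) *\<^sub>R F l i)"
      by (simp add: inner)
    finally show ?thesis .
  qed
  have thform: "th k = 1/2 * (\<Sum>a\<in>UNIV. J a k * w a)" for k
    unfolding hth w_def by (simp add: sum_distrib_left mult_ac)
  define W where "W i = (\<Sum>c\<in>UNIV. J c i *\<^sub>R V c)" for i
  have W: "W i = - ((1/2) *\<^sub>R R i)" for i
    using S5[of i] P2P1[of i] P1z[of i] unfolding W_def[symmetric]
    by (metis (no_types, lifting) add_0 scaleR_2 scaleR_half_double scaleR_minus_right)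
  have VW: "V j = - (\<Sum>i\<in>UNIV. J i j *\<^sub>R W i)" for j
  proof -
    have "(\<Sum>i\<in>UNIV. J i j *\<^sub>R W i) = (\<Sum>i\<in>UNIV. \<Sum>c\<in>UNIV. (J c i * J i j) *\<^sub>R V c)"
      by (simp add: W_def scaleR_sum_right mult.commute)
    also have "\<dots> = (\<Sum>c\<in>UNIV. (\<Sum>i\<in>UNIV. J c i * J i j) *\<^sub>R V c)"
      by (subst sum.swap) (simp add: scaleR_sum_left)
    also have "\<dots> = - V j" by (simp add: hJJ deltaR_r)
    finally show ?thesis by simp
  qed
  define X where "X l = (\<Sum>i\<in>UNIV. J i j *\<^sub>R F l i)" for l
  have LHS: "(\<Sum>i\<in>UNIV. \<Sum>k\<in>UNIV. gi i k *\<^sub>R N k i j) = V j"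
    unfolding V_def by (subst sum.swap) (simp add: hgs)
  have E1: "(\<Sum>i\<in>UNIV. J i j *\<^sub>R R i) = (\<Sum>m\<in>UNIV. w m *\<^sub>R (\<Sum>l\<in>UNIV. gi l m *\<^sub>R X l))"
  proof -
    have "(\<Sum>i\<in>UNIV. J i j *\<^sub>R R i) = (\<Sum>i\<in>UNIV. \<Sum>l\<in>UNIV. \<Sum>m\<in>UNIV. (w m * gi l m * J i j) *\<^sub>R F l i)"
      by (simp add: Rform scaleR_sum_right scaleR_sum_left mult_ac)
    also have "\<dots> = (\<Sum>m\<in>UNIV. \<Sum>i\<in>UNIV. \<Sum>l\<in>UNIV. (w m * gi l m * J i j) *\<^sub>R F l i)"
      by (subst sum.swap, rule sum.cong[OF refl], rule sum.swap)
    also have "\<dots> = (\<Sum>m\<in>UNIV. \<Sum>l\<in>UNIV. \<Sum>i\<in>UNIV. (w m * gi l m * J i j) *\<^sub>R F l i)"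
      by (rule sum.cong[OF refl], rule sum.swap)
    also have "\<dots> = (\<Sum>m\<in>UNIV. w m *\<^sub>R (\<Sum>l\<in>UNIV. gi l m *\<^sub>R X l))"
      by (simp add: X_def scaleR_sum_right mult.assoc)
    finally show ?thesis .
  qed
  have Y: "(\<Sum>i\<in>UNIV. (\<Sum>k\<in>UNIV. J a k * gi k i) *\<^sub>R F i j) = (\<Sum>l\<in>UNIV. gi l a *\<^sub>R X l)" for a
  proof -
    have "(\<Sum>i\<in>UNIV. (\<Sum>k\<in>UNIV. J a k * gi k i) *\<^sub>R F i j) = (\<Sum>i\<in>UNIV. Om a i *\<^sub>R F i j)"
      by (simp add: hOm)
    also have "\<dots> = (\<Sum>i\<in>UNIV. \<Sum>l\<in>UNIV. (gi l a * J i l) *\<^sub>R F j i)"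
      apply (intro sum.cong refl)
      subgoal for i using L3[of a i] hFa[of i j] by (simp add: hOm scaleR_sum_left mult.commute)
      done
    also have "\<dots> = (\<Sum>l\<in>UNIV. gi l a *\<^sub>R (\<Sum>i\<in>UNIV. J i l *\<^sub>R F j i))"
      by (subst sum.swap) (simp add: scaleR_sum_right)
    also have "\<dots> = (\<Sum>l\<in>UNIV. gi l a *\<^sub>R X l)"
      by (simp add: X_def L4)
    finally show ?thesis .
  qed
  have E2: "(\<Sum>i\<in>UNIV. \<Sum>k\<in>UNIV. (gi i k * th k) *\<^sub>R F i j) = (1/2) *\<^sub>R (\<Sum>a\<in>UNIV. w a *\<^sub>R (\<Sum>l\<in>UNIV. gi l a *\<^sub>R X l))"
  proof -
    have "(\<Sum>i\<in>UNIV. \<Sum>k\<in>UNIV. (gi i k * th k) *\<^sub>R F i j) = (1/2) *\<^sub>R (\<Sum>i\<in>UNIV. \<Sum>k\<in>UNIV. \<Sum>a\<in>UNIV. (w a * (J a k * gi k i)) *\<^sub>R F i j)"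
      by (simp add: thform scaleR_sum_right scaleR_sum_left sum_distrib_left hgs mult_ac)
    also have "\<dots> = (1/2) *\<^sub>R (\<Sum>a\<in>UNIV. \<Sum>i\<in>UNIV. \<Sum>k\<in>UNIV. (w a * (J a k * gi k i)) *\<^sub>R F i j)"
      by (rule arg_cong[where f="scaleR (1/2)"], rule sum_rot3[symmetric])
    also have "\<dots> = (1/2) *\<^sub>R (\<Sum>a\<in>UNIV. w a *\<^sub>R (\<Sum>i\<in>UNIV. (\<Sum>k\<in>UNIV. J a k * gi k i) *\<^sub>R F i j))"
      by (simp add: scaleR_sum_right scaleR_sum_left sum_distrib_left)
    also have "\<dots> = (1/2) *\<^sub>R (\<Sum>a\<in>UNIV. w a *\<^sub>R (\<Sum>l\<in>UNIV. gi l a *\<^sub>R X l))"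
      by (simp add: Y)
    finally show ?thesis .
  qed
  have V2: "V j = (1/2) *\<^sub>R (\<Sum>i\<in>UNIV. J i j *\<^sub>R R i)"
  proof -
    have "V j = - (\<Sum>i\<in>UNIV. J i j *\<^sub>R W i)" by (rule VW)
    also have "\<dots> = (\<Sum>i\<in>UNIV. (1/2) *\<^sub>R (J i j *\<^sub>R R i))"
      by (simp add: W sum_negf[symmetric])
    also have "\<dots> = (1/2) *\<^sub>R (\<Sum>i\<in>UNIV. J i j *\<^sub>R R i)"
      by (simp add: scaleR_sum_right)
    finally show ?thesis .
  qed
  show ?thesis
    using LHS E1 E2 V2 by simp
qed


lemma GL:
  fixes J dJk :: "'n::finite \<Rightarrow> 'n \<Rightarrow> real" and Gk :: "'n \<Rightarrow> 'n \<Rightarrow> real"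
    and F :: "'n \<Rightarrow> 'n \<Rightarrow> 'v::real_vector"
  assumes hF11: "\<And>i j. F i j = (\<Sum>a\<in>UNIV. \<Sum>b\<in>UNIV. (J a i * J b j) *\<^sub>R F a b)"
    and hdJ: "\<And>a i. dJk a i = - (\<Sum>l\<in>UNIV. Gk a l * J l i) + (\<Sum>l\<in>UNIV. Gk l i * J a l)"
  shows "(\<Sum>a\<in>UNIV. \<Sum>b\<in>UNIV. (dJk a i * J b j) *\<^sub>R F a b)
       + (\<Sum>a\<in>UNIV. \<Sum>b\<in>UNIV. (J a i * J b j) *\<^sub>R (\<Sum>l\<in>UNIV. Gk l a *\<^sub>R F l b))
       = (\<Sum>l\<in>UNIV. Gk l i *\<^sub>R F l j)"
proof -
  define X1 where "X1 = (\<Sum>a\<in>UNIV. \<Sum>b\<in>UNIV. \<Sum>l\<in>UNIV. (Gk a l * J l i * J b j) *\<^sub>R F a b)"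
  have T1: "(\<Sum>a\<in>UNIV. \<Sum>b\<in>UNIV. (dJk a i * J b j) *\<^sub>R F a b) = - X1 + (\<Sum>l\<in>UNIV. Gk l i *\<^sub>R F l j)"
  proof -
    have "(\<Sum>a\<in>UNIV. \<Sum>b\<in>UNIV. (dJk a i * J b j) *\<^sub>R F a b)
      = - X1 + (\<Sum>a\<in>UNIV. \<Sum>b\<in>UNIV. \<Sum>l\<in>UNIV. (Gk l i * J a l * J b j) *\<^sub>R F a b)"
    proof -
      have c: "dJk a i * J b j = - (\<Sum>l\<in>UNIV. Gk a l * J l i * J b j) + (\<Sum>l\<in>UNIV. Gk l i * J a l * J b j)" for a b
        by (simp add: hdJ sum_distrib_right sum_distrib_left algebra_simps)
      have "(\<Sum>a\<in>UNIV. \<Sum>b\<in>UNIV. (dJk a i * J b j) *\<^sub>R F a b)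
         = (\<Sum>a\<in>UNIV. \<Sum>b\<in>UNIV. - (\<Sum>l\<in>UNIV. (Gk a l * J l i * J b j) *\<^sub>R F a b) + (\<Sum>l\<in>UNIV. (Gk l i * J a l * J b j) *\<^sub>R F a b))"
        by (intro sum.cong refl) (simp only: c scaleR_left_distrib scaleR_minus_left scaleR_sum_left)
      then show ?thesis by (simp add: X1_def sum.distrib sum_negf sum_subtractf)
    qed
    also have "(\<Sum>a\<in>UNIV. \<Sum>b\<in>UNIV. \<Sum>l\<in>UNIV. (Gk l i * J a l * J b j) *\<^sub>R F a b)
       = (\<Sum>l\<in>UNIV. \<Sum>a\<in>UNIV. \<Sum>b\<in>UNIV. (Gk l i * J a l * J b j) *\<^sub>R F a b)"
      by (rule sum_rot3[symmetric])
    also have "\<dots> = (\<Sum>l\<in>UNIV. Gk l i *\<^sub>R F l j)"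
      by (subst (2) hF11) (simp add: scaleR_sum_right mult.assoc)
    finally show ?thesis .
  qed
  have T3: "(\<Sum>a\<in>UNIV. \<Sum>b\<in>UNIV. (J a i * J b j) *\<^sub>R (\<Sum>l\<in>UNIV. Gk l a *\<^sub>R F l b)) = X1"
  proof -
    have "(\<Sum>a\<in>UNIV. \<Sum>b\<in>UNIV. (J a i * J b j) *\<^sub>R (\<Sum>l\<in>UNIV. Gk l a *\<^sub>R F l b))
      = (\<Sum>a\<in>UNIV. \<Sum>b\<in>UNIV. \<Sum>l\<in>UNIV. (Gk l a * J a i * J b j) *\<^sub>R F l b)"
      by (simp add: scaleR_sum_right mult_ac)
    also have "\<dots> = (\<Sum>a\<in>UNIV. \<Sum>l\<in>UNIV. \<Sum>b\<in>UNIV. (Gk l a * J a i * J b j) *\<^sub>R F l b)"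
      by (rule sum.cong[OF refl], rule sum.swap)
    also have "\<dots> = (\<Sum>l\<in>UNIV. \<Sum>a\<in>UNIV. \<Sum>b\<in>UNIV. (Gk l a * J a i * J b j) *\<^sub>R F l b)"
      by (rule sum.swap)
    also have "\<dots> = X1"
      unfolding X1_def by (rule sum.cong[OF refl], rule sum.swap)
    finally show ?thesis .
  qed
  show ?thesis using T1 T3 by simp
qed

lemma grp: "dF = D + (T1 + T2) \<Longrightarrow> T1 + T3 = P \<Longrightarrow> T2 + T4 = Q \<Longrightarrow> C' = Cm
   \<Longrightarrow> D + C' - T3 - T4 = dF + Cm - P - (Q::'a::ab_group_add)"
  by (auto simp: algebra_simps)

lemma N11:
  fixes J :: "'n::finite \<Rightarrow> 'n \<Rightarrow> real" and dJ Gp :: "'n \<Rightarrow> 'n \<Rightarrow> 'n \<Rightarrow> real"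
    and F :: "'n \<Rightarrow> 'n \<Rightarrow> 'v::real_vector" and dF N :: "'n \<Rightarrow> 'n \<Rightarrow> 'n \<Rightarrow> 'v"
    and Cm :: "'n \<Rightarrow> 'v \<Rightarrow> 'v"
  assumes hF11: "\<And>i j. F i j = (\<Sum>a\<in>UNIV. \<Sum>b\<in>UNIV. (J a i * J b j) *\<^sub>R F a b)"
    and hdT: "\<And>k i j. dF k i j = (\<Sum>a\<in>UNIV. \<Sum>b\<in>UNIV. (dJ k a i * J b j + J a i * dJ k b j) *\<^sub>R F a b)
                 + (\<Sum>a\<in>UNIV. \<Sum>b\<in>UNIV. (J a i * J b j) *\<^sub>R dF k a b)"
    and hdJ: "\<And>k a i. dJ k a i = - (\<Sum>l\<in>UNIV. Gp k a l * J l i) + (\<Sum>l\<in>UNIV. Gp k l i * J a l)"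
    and hC: "\<And>k. linear (Cm k)"
    and hN: "\<And>k i j. N k i j = dF k i j + Cm k (F i j) - (\<Sum>l\<in>UNIV. Gp k l i *\<^sub>R F l j) - (\<Sum>l\<in>UNIV. Gp k l j *\<^sub>R F i l)"
  shows "N k i j = (\<Sum>a\<in>UNIV. \<Sum>b\<in>UNIV. (J a i * J b j) *\<^sub>R N k a b)"
proof -
  have G1: "(\<Sum>a\<in>UNIV. \<Sum>b\<in>UNIV. (dJ k a i * J b j) *\<^sub>R F a b)
       + (\<Sum>a\<in>UNIV. \<Sum>b\<in>UNIV. (J a i * J b j) *\<^sub>R (\<Sum>l\<in>UNIV. Gp k l a *\<^sub>R F l b))
       = (\<Sum>l\<in>UNIV. Gp k l i *\<^sub>R F l j)"
    by (rule GL[OF hF11 hdJ])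
  have hF11': "(\<lambda>a b. F b a) i j = (\<Sum>a\<in>UNIV. \<Sum>b\<in>UNIV. (J a i * J b j) *\<^sub>R (\<lambda>a b. F b a) a b)" for i j
    using hF11[of j i] by (subst (asm) sum.swap) (simp add: mult.commute)
  have G2': "(\<Sum>a\<in>UNIV. \<Sum>b\<in>UNIV. (dJ k a j * J b i) *\<^sub>R F b a)
       + (\<Sum>a\<in>UNIV. \<Sum>b\<in>UNIV. (J a j * J b i) *\<^sub>R (\<Sum>l\<in>UNIV. Gp k l a *\<^sub>R F b l))
       = (\<Sum>l\<in>UNIV. Gp k l j *\<^sub>R F i l)"
    using GL[of "\<lambda>a b. F b a" J "dJ k" "Gp k", OF hF11' hdJ, of j i] by simp
  have G2: "(\<Sum>a\<in>UNIV. \<Sum>b\<in>UNIV. (J a i * dJ k b j) *\<^sub>R F a b)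
       + (\<Sum>a\<in>UNIV. \<Sum>b\<in>UNIV. (J a i * J b j) *\<^sub>R (\<Sum>l\<in>UNIV. Gp k l b *\<^sub>R F a l))
       = (\<Sum>l\<in>UNIV. Gp k l j *\<^sub>R F i l)"
  proof -
    have "(\<Sum>a\<in>UNIV. \<Sum>b\<in>UNIV. (J a i * dJ k b j) *\<^sub>R F a b) = (\<Sum>a\<in>UNIV. \<Sum>b\<in>UNIV. (dJ k a j * J b i) *\<^sub>R F b a)"
      by (subst sum.swap) (simp add: mult.commute)
    moreover have "(\<Sum>a\<in>UNIV. \<Sum>b\<in>UNIV. (J a i * J b j) *\<^sub>R (\<Sum>l\<in>UNIV. Gp k l b *\<^sub>R F a l))
        = (\<Sum>a\<in>UNIV. \<Sum>b\<in>UNIV. (J a j * J b i) *\<^sub>R (\<Sum>l\<in>UNIV. Gp k l a *\<^sub>R F b l))"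
      by (subst sum.swap) (simp add: mult.commute)
    ultimately show ?thesis using G2' by simp
  qed
  have CC: "(\<Sum>a\<in>UNIV. \<Sum>b\<in>UNIV. (J a i * J b j) *\<^sub>R Cm k (F a b)) = Cm k (F i j)"
    by (subst (2) hF11) (simp add: linear_sum[OF hC] linear_scale[OF hC])
  have "(\<Sum>a\<in>UNIV. \<Sum>b\<in>UNIV. (J a i * J b j) *\<^sub>R N k a b)
     = (\<Sum>a\<in>UNIV. \<Sum>b\<in>UNIV. (J a i * J b j) *\<^sub>R dF k a b)
       + (\<Sum>a\<in>UNIV. \<Sum>b\<in>UNIV. (J a i * J b j) *\<^sub>R Cm k (F a b))
       - (\<Sum>a\<in>UNIV. \<Sum>b\<in>UNIV. (J a i * J b j) *\<^sub>R (\<Sum>l\<in>UNIV. Gp k l a *\<^sub>R F l b))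
       - (\<Sum>a\<in>UNIV. \<Sum>b\<in>UNIV. (J a i * J b j) *\<^sub>R (\<Sum>l\<in>UNIV. Gp k l b *\<^sub>R F a l))"
    by (simp add: hN scaleR_right_distrib scaleR_right_diff_distrib sum.distrib sum_subtractf)
  also have "\<dots> = N k i j"
  proof -
    have dT: "dF k i j = (\<Sum>a\<in>UNIV. \<Sum>b\<in>UNIV. (J a i * J b j) *\<^sub>R dF k a b)
       + ((\<Sum>a\<in>UNIV. \<Sum>b\<in>UNIV. (dJ k a i * J b j) *\<^sub>R F a b) + (\<Sum>a\<in>UNIV. \<Sum>b\<in>UNIV. (J a i * dJ k b j) *\<^sub>R F a b))"
      using hdT[of k i j] by (simp only: scaleR_left_distrib sum.distrib add.commute)
    show ?thesis unfolding hN[of k i j]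
      by (rule grp[OF dT G1 G2 CC])
  qed
  finally show ?thesis by simp
qed

lemma Bian:
  fixes LC Hu Gp :: "'n::finite \<Rightarrow> 'n \<Rightarrow> 'n \<Rightarrow> real"
    and F :: "'n \<Rightarrow> 'n \<Rightarrow> 'v::real_vector" and dF N :: "'n \<Rightarrow> 'n \<Rightarrow> 'n \<Rightarrow> 'v"
    and Cm :: "'n \<Rightarrow> 'v \<Rightarrow> 'v"
  assumes hN: "\<And>k i j. N k i j = dF k i j + Cm k (F i j) - (\<Sum>l\<in>UNIV. Gp k l i *\<^sub>R F l j) - (\<Sum>l\<in>UNIV. Gp k l j *\<^sub>R F i l)"
    and raw: "\<And>k i j. dF k i j + dF i j k + dF j k i + Cm k (F i j) + Cm i (F j k) + Cm j (F k i) = 0"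
    and hGp: "\<And>k l i. Gp k l i = LC l k i + 1/2 * Hu l k i"
    and hLC: "\<And>l a b. LC l a b = LC l b a"
    and hHuA: "\<And>l a b. Hu l a b = - Hu l b a"
    and hFa: "\<And>a b. F a b = - F b a"
  shows "N k i j + N i j k + N j k i =
        - (\<Sum>l\<in>UNIV. Hu l k i *\<^sub>R F l j + Hu l j k *\<^sub>R F l i + Hu l i j *\<^sub>R F l k)"
proof -
  have per: "Gp k l i *\<^sub>R F l j + Gp k l j *\<^sub>R F i l + Gp i l j *\<^sub>R F l k + Gp i l k *\<^sub>R F j l
      + Gp j l k *\<^sub>R F l i + Gp j l i *\<^sub>R F k l
      = Hu l k i *\<^sub>R F l j + Hu l j k *\<^sub>R F l i + Hu l i j *\<^sub>R F l k" for l
  proof -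
    have a1: "Gp k l i *\<^sub>R F l j + Gp i l k *\<^sub>R F j l = Hu l k i *\<^sub>R F l j"
    proof -
      have "Gp k l i *\<^sub>R F l j + Gp i l k *\<^sub>R F j l = (Gp k l i - Gp i l k) *\<^sub>R F l j"
        using hFa[of j l] by (simp add: scaleR_left_diff_distrib)
      moreover have "Gp k l i - Gp i l k = Hu l k i" using hLC[of l i k] hHuA[of l i k] by (simp add: hGp)
      ultimately show ?thesis by simp
    qed
    have a2: "Gp k l j *\<^sub>R F i l + Gp j l k *\<^sub>R F l i = Hu l j k *\<^sub>R F l i"
    proof -
      have "Gp k l j *\<^sub>R F i l + Gp j l k *\<^sub>R F l i = (Gp j l k - Gp k l j) *\<^sub>R F l i"
        using hFa[of i l] by (simp add: scaleR_left_diff_distrib)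
      moreover have "Gp j l k - Gp k l j = Hu l j k" using hLC[of l k j] hHuA[of l k j] by (simp add: hGp)
      ultimately show ?thesis by simp
    qed
    have a3: "Gp i l j *\<^sub>R F l k + Gp j l i *\<^sub>R F k l = Hu l i j *\<^sub>R F l k"
    proof -
      have "Gp i l j *\<^sub>R F l k + Gp j l i *\<^sub>R F k l = (Gp i l j - Gp j l i) *\<^sub>R F l k"
        using hFa[of k l] by (simp add: scaleR_left_diff_distrib)
      moreover have "Gp i l j - Gp j l i = Hu l i j" using hLC[of l j i] hHuA[of l j i] by (simp add: hGp)
      ultimately show ?thesis by simp
    qed
    have "Gp k l i *\<^sub>R F l j + Gp k l j *\<^sub>R F i l + Gp i l j *\<^sub>R F l k + Gp i l k *\<^sub>R F j l
      + Gp j l k *\<^sub>R F l i + Gp j l i *\<^sub>R F k l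
      = (Gp k l i *\<^sub>R F l j + Gp i l k *\<^sub>R F j l) + (Gp k l j *\<^sub>R F i l + Gp j l k *\<^sub>R F l i)
        + (Gp i l j *\<^sub>R F l k + Gp j l i *\<^sub>R F k l)"
      by (simp only: add_ac)
    also have "\<dots> = Hu l k i *\<^sub>R F l j + Hu l j k *\<^sub>R F l i + Hu l i j *\<^sub>R F l k"
      by (simp only: a1 a2 a3)
    finally show ?thesis .
  qed
  have "N k i j + N i j k + N j k i
      = (dF k i j + dF i j k + dF j k i + Cm k (F i j) + Cm i (F j k) + Cm j (F k i))
        - (\<Sum>l\<in>UNIV. Gp k l i *\<^sub>R F l j + Gp k l j *\<^sub>R F i l + Gp i l j *\<^sub>R F l k + Gp i l k *\<^sub>R F j l
      + Gp j l k *\<^sub>R F l i + Gp j l i *\<^sub>R F k l)"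
    by (simp add: hN sum.distrib algebra_simps)
  also have "\<dots> = - (\<Sum>l\<in>UNIV. Hu l k i *\<^sub>R F l j + Hu l j k *\<^sub>R F l i + Hu l i j *\<^sub>R F l k)"
    using raw[of k i j] per by simp
  finally show ?thesis .
qed


lemma contract_g:
  fixes g gi :: "'n::finite \<Rightarrow> 'n \<Rightarrow> real"
  assumes hggi: "\<And>a c. (\<Sum>b\<in>UNIV. g a b * gi b c) = (if a = c then 1 else 0)"
    and hgs: "\<And>a b. g a b = g b a"
  shows "(\<Sum>l\<in>UNIV. (\<Sum>m\<in>UNIV. gi l m * X m) * g l b) = X b"
proof -
  have "(\<Sum>l\<in>UNIV. (\<Sum>m\<in>UNIV. gi l m * X m) * g l b) = (\<Sum>l\<in>UNIV. \<Sum>m\<in>UNIV. g b l * gi l m * X m)"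
    by (simp add: sum_distrib_right sum_distrib_left hgs[of _ b] mult_ac)
  also have "\<dots> = (\<Sum>m\<in>UNIV. (\<Sum>l\<in>UNIV. g b l * gi l m) * X m)"
    by (subst sum.swap) (simp add: sum_distrib_right)
  also have "\<dots> = X b" by (simp add: hggi delta_l)
  finally show ?thesis .
qed

lemma metric_compat:
  fixes g gi :: "'n::finite \<Rightarrow> 'n \<Rightarrow> real" and dg LC Hu Gp H :: "'n \<Rightarrow> 'n \<Rightarrow> 'n \<Rightarrow> real"
  assumes hLCd: "\<And>k i j. LC k i j = 1/2 * (\<Sum>l\<in>UNIV. gi k l * (dg i l j + dg j l i - dg l i j))"
    and hdgs: "\<And>c a b. dg c a b = dg c b a"
    and hggi: "\<And>a c. (\<Sum>b\<in>UNIV. g a b * gi b c) = (if a = c then 1 else 0)"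
    and hgs: "\<And>a b. g a b = g b a"
    and hHu: "\<And>l a b. Hu l a b = (\<Sum>m\<in>UNIV. gi l m * H m a b)"
    and hGp: "\<And>k l i. Gp k l i = LC l k i + 1/2 * Hu l k i"
    and hH1: "\<And>a b c. H a b c = - H b a c"
    and hH2: "\<And>a b c. H a b c = - H a c b"
  shows "dg i a b = (\<Sum>l\<in>UNIV. Gp i l a * g l b) + (\<Sum>l\<in>UNIV. Gp i l b * g a l)"
proof -
  have c1: "(\<Sum>l\<in>UNIV. Gp i l a * g l b) = 1/2 * (dg i b a + dg a b i - dg b i a) + 1/2 * H b i a" for a b
  proof -
    have "(\<Sum>l\<in>UNIV. Gp i l a * g l b) = 1/2 * (\<Sum>l\<in>UNIV. (\<Sum>m\<in>UNIV. gi l m * (dg i m a + dg a m i - dg m i a)) * g l b)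
        + 1/2 * (\<Sum>l\<in>UNIV. (\<Sum>m\<in>UNIV. gi l m * H m i a) * g l b)"
      by (simp add: hGp hLCd hHu algebra_simps sum.distrib sum_distrib_left)
    also have "\<dots> = 1/2 * (dg i b a + dg a b i - dg b i a) + 1/2 * H b i a"
      by (simp add: contract_g[OF hggi hgs])
    finally show ?thesis .
  qed
  have "H b i a + H a i b = 0" using hH1[of b i a] hH2[of i b a] hH1[of a i b] by simp
  then show ?thesis
    using c1[of a b] c1[of b a] hgs[of a] hdgs[of i b a] hdgs[of a b i] hdgs[of b a i]
    by (simp add: algebra_simps)
qed

lemma dm1: "(\<Sum>k\<in>(UNIV::'n::finite set). f k * (if k = c then 1 else 0)) = (f c::real)"
proof -
  have "\<And>k. f k * (if k = c then 1 else 0) = (if k = c then f c else 0)" by auto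
  then show ?thesis by simp
qed
lemma dm2: "(\<Sum>k\<in>(UNIV::'n::finite set). f k * (if c = k then 1 else 0)) = (f c::real)"
proof -
  have "\<And>k. f k * (if c = k then 1 else 0) = (if c = k then f c else 0)" by auto
  then show ?thesis by simp
qed

lemma dgi_formula:
  fixes g gi :: "'n::finite \<Rightarrow> 'n \<Rightarrow> real" and dg dgi Gp :: "'n \<Rightarrow> 'n \<Rightarrow> 'n \<Rightarrow> real"
  assumes hd: "\<And>a c. (\<Sum>b\<in>UNIV. dg i a b * gi b c) + (\<Sum>b\<in>UNIV. g a b * dgi i b c) = 0"
    and hmc: "\<And>a b. dg i a b = (\<Sum>l\<in>UNIV. Gp i l a * g l b) + (\<Sum>l\<in>UNIV. Gp i l b * g a l)"
    and hggi: "\<And>a c. (\<Sum>b\<in>UNIV. g a b * gi b c) = (if a = c then 1 else 0)"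
    and hgig: "\<And>a c. (\<Sum>b\<in>UNIV. gi a b * g b c) = (if a = c then 1 else 0)"
  shows "dgi i k c = - (\<Sum>l\<in>UNIV. Gp i k l * gi l c) - (\<Sum>l\<in>UNIV. Gp i c l * gi k l)"
proof -
  have "dgi i k c = (\<Sum>b\<in>UNIV. (\<Sum>a\<in>UNIV. gi k a * g a b) * dgi i b c)"
    by (simp add: hgig delta_l)
  also have "\<dots> = (\<Sum>a\<in>UNIV. gi k a * (\<Sum>b\<in>UNIV. g a b * dgi i b c))"
    by (simp add: sum_distrib_left sum_distrib_right mult_ac) (rule sum.swap)
  also have "\<dots> = - (\<Sum>a\<in>UNIV. gi k a * (\<Sum>b\<in>UNIV. dg i a b * gi b c))"
  proof -
    have "\<And>a. (\<Sum>b\<in>UNIV. g a b * dgi i b c) = - (\<Sum>b\<in>UNIV. dg i a b * gi b c)"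
      using hd by (simp add: eq_neg_iff_add_eq_0 add.commute)
    then show ?thesis by (simp add: sum_negf)
  qed
  also have "(\<Sum>a\<in>UNIV. gi k a * (\<Sum>b\<in>UNIV. dg i a b * gi b c))
      = (\<Sum>a\<in>UNIV. gi k a * (\<Sum>l\<in>UNIV. Gp i l a * (\<Sum>b\<in>UNIV. g l b * gi b c)))
        + (\<Sum>b\<in>UNIV. (\<Sum>l\<in>UNIV. Gp i l b * (\<Sum>a\<in>UNIV. gi k a * g a l)) * gi b c)"
  proof -
    have "(\<Sum>a\<in>UNIV. gi k a * (\<Sum>b\<in>UNIV. dg i a b * gi b c))
      = (\<Sum>a\<in>UNIV. \<Sum>b\<in>UNIV. \<Sum>l\<in>UNIV. gi k a * Gp i l a * g l b * gi b c)
        + (\<Sum>a\<in>UNIV. \<Sum>b\<in>UNIV. \<Sum>l\<in>UNIV. gi k a * Gp i l b * g a l * gi b c)"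
      by (simp add: hmc algebra_simps sum_distrib_left sum_distrib_right sum.distrib)
    also have "(\<Sum>a\<in>UNIV. \<Sum>b\<in>UNIV. \<Sum>l\<in>UNIV. gi k a * Gp i l a * g l b * gi b c)
        = (\<Sum>a\<in>UNIV. gi k a * (\<Sum>l\<in>UNIV. Gp i l a * (\<Sum>b\<in>UNIV. g l b * gi b c)))"
      by (simp add: sum_distrib_left mult_ac) (rule sum.cong[OF refl], rule sum.swap)
    also have "(\<Sum>a\<in>UNIV. \<Sum>b\<in>UNIV. \<Sum>l\<in>UNIV. gi k a * Gp i l b * g a l * gi b c)
        = (\<Sum>b\<in>UNIV. (\<Sum>l\<in>UNIV. Gp i l b * (\<Sum>a\<in>UNIV. gi k a * g a l)) * gi b c)"
    proof -
      have "(\<Sum>a\<in>UNIV. \<Sum>b\<in>UNIV. \<Sum>l\<in>UNIV. gi k a * Gp i l b * g a l * gi b c)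
          = (\<Sum>b\<in>UNIV. \<Sum>l\<in>UNIV. \<Sum>a\<in>UNIV. gi k a * Gp i l b * g a l * gi b c)"
        by (rule sum_rot3)
      then show ?thesis by (simp add: sum_distrib_left sum_distrib_right mult_ac)
    qed
    finally show ?thesis .
  qed
  also have "- (\<dots>) = - (\<Sum>l\<in>UNIV. Gp i k l * gi l c) - (\<Sum>l\<in>UNIV. Gp i c l * gi k l)"
  proof -
    have x1: "(\<Sum>l\<in>UNIV. Gp i l a * (\<Sum>b\<in>UNIV. g l b * gi b c)) = Gp i c a" for a
      by (simp only: hggi dm1)
    have x2: "(\<Sum>l\<in>UNIV. Gp i l b * (\<Sum>a\<in>UNIV. gi k a * g a l)) = Gp i k b" for b
      by (simp only: hgig dm2)
    show ?thesis by (simp only: x1 x2) (simp add: mult.commute)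
  qed
  finally show ?thesis .
qed

lemma dOm_formula:
  fixes J gi Om :: "'n::finite \<Rightarrow> 'n \<Rightarrow> real" and dJ dgi Gp :: "'n \<Rightarrow> 'n \<Rightarrow> 'n \<Rightarrow> real"
  assumes hdJ: "\<And>j b. dJ i j b = - (\<Sum>l\<in>UNIV. Gp i j l * J l b) + (\<Sum>l\<in>UNIV. Gp i l b * J j l)"
    and hdgi: "\<And>b k. dgi i b k = - (\<Sum>l\<in>UNIV. Gp i b l * gi l k) - (\<Sum>l\<in>UNIV. Gp i k l * gi b l)"
    and hOm: "\<And>j k. Om j k = (\<Sum>b\<in>UNIV. J j b * gi b k)"
  shows "(\<Sum>b\<in>UNIV. dJ i j b * gi b k + J j b * dgi i b k) = - (\<Sum>l\<in>UNIV. Gp i j l * Om l k) - (\<Sum>l\<in>UNIV. Gp i k l * Om j l)"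
proof -
  define Z where "Z = (\<Sum>b\<in>UNIV. \<Sum>l\<in>UNIV. Gp i l b * J j l * gi b k)"
  have e1: "(\<Sum>b\<in>UNIV. dJ i j b * gi b k) = - (\<Sum>l\<in>UNIV. Gp i j l * Om l k) + Z"
  proof -
    have "(\<Sum>b\<in>UNIV. dJ i j b * gi b k) = - (\<Sum>b\<in>UNIV. \<Sum>l\<in>UNIV. Gp i j l * J l b * gi b k) + Z"
      by (simp add: Z_def hdJ algebra_simps sum_distrib_right sum_distrib_left sum.distrib sum_negf sum_subtractf)
    moreover have "(\<Sum>b\<in>UNIV. \<Sum>l\<in>UNIV. Gp i j l * J l b * gi b k) = (\<Sum>l\<in>UNIV. Gp i j l * Om l k)"
      by (subst sum.swap) (simp add: hOm sum_distrib_left mult_ac)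
    ultimately show ?thesis by simp
  qed
  have e2: "(\<Sum>b\<in>UNIV. J j b * dgi i b k) = - Z - (\<Sum>l\<in>UNIV. Gp i k l * Om j l)"
  proof -
    have "(\<Sum>b\<in>UNIV. J j b * dgi i b k) = - (\<Sum>b\<in>UNIV. \<Sum>l\<in>UNIV. J j b * Gp i b l * gi l k)
        - (\<Sum>b\<in>UNIV. \<Sum>l\<in>UNIV. Gp i k l * J j b * gi b l)"
      by (simp add: hdgi algebra_simps sum_distrib_left sum_subtractf sum_negf)
    moreover have "(\<Sum>b\<in>UNIV. \<Sum>l\<in>UNIV. J j b * Gp i b l * gi l k) = Z"
      unfolding Z_def by (subst sum.swap) (simp add: mult_ac)
    moreover have "(\<Sum>b\<in>UNIV. \<Sum>l\<in>UNIV. Gp i k l * J j b * gi b l) = (\<Sum>l\<in>UNIV. Gp i k l * Om j l)"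
      by (subst sum.swap) (simp add: hOm sum_distrib_left mult_ac)
    ultimately show ?thesis by simp
  qed
  show ?thesis using e1 e2 by (simp add: sum.distrib)
qed

lemma trace_N:
  fixes Om :: "'n::finite \<Rightarrow> 'n \<Rightarrow> real" and dOm Gp :: "'n \<Rightarrow> 'n \<Rightarrow> 'n \<Rightarrow> real"
    and F :: "'n \<Rightarrow> 'n \<Rightarrow> 'v::real_vector" and dF N :: "'n \<Rightarrow> 'n \<Rightarrow> 'n \<Rightarrow> 'v"
    and Cm :: "'n \<Rightarrow> 'v \<Rightarrow> 'v"
  assumes hN: "\<And>k i j. N k i j = dF k i j + Cm k (F i j) - (\<Sum>l\<in>UNIV. Gp k l i *\<^sub>R F l j) - (\<Sum>l\<in>UNIV. Gp k l j *\<^sub>R F i l)"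
    and hdtr: "(\<Sum>j\<in>UNIV. \<Sum>k\<in>UNIV. dOm i j k *\<^sub>R F j k + Om j k *\<^sub>R dF i j k) = 0"
    and hCtr: "(\<Sum>j\<in>UNIV. \<Sum>k\<in>UNIV. Om j k *\<^sub>R Cm i (F j k)) = 0"
    and hdOm: "\<And>j k. dOm i j k = - (\<Sum>l\<in>UNIV. Gp i j l * Om l k) - (\<Sum>l\<in>UNIV. Gp i k l * Om j l)"
  shows "(\<Sum>j\<in>UNIV. \<Sum>k\<in>UNIV. Om j k *\<^sub>R N i j k) = 0"
proof -
  define A1 where "A1 = (\<Sum>j\<in>UNIV. \<Sum>k\<in>UNIV. \<Sum>l\<in>UNIV. (Gp i j l * Om l k) *\<^sub>R F j k)"
  define A2 where "A2 = (\<Sum>j\<in>UNIV. \<Sum>k\<in>UNIV. \<Sum>l\<in>UNIV. (Gp i k l * Om j l) *\<^sub>R F j k)"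
  have dOmF: "(\<Sum>j\<in>UNIV. \<Sum>k\<in>UNIV. dOm i j k *\<^sub>R F j k) = - A1 - A2"
    by (simp add: A1_def A2_def hdOm scaleR_left_diff_distrib scaleR_sum_left sum_subtractf sum_negf)
  have B1: "(\<Sum>j\<in>UNIV. \<Sum>k\<in>UNIV. Om j k *\<^sub>R (\<Sum>l\<in>UNIV. Gp i l j *\<^sub>R F l k)) = A1"
  proof -
    have "(\<Sum>j\<in>UNIV. \<Sum>k\<in>UNIV. Om j k *\<^sub>R (\<Sum>l\<in>UNIV. Gp i l j *\<^sub>R F l k))
       = (\<Sum>j\<in>UNIV. \<Sum>k\<in>UNIV. \<Sum>l\<in>UNIV. (Gp i l j * Om j k) *\<^sub>R F l k)"
      by (simp add: scaleR_sum_right mult.commute)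
    also have "\<dots> = (\<Sum>l\<in>UNIV. \<Sum>j\<in>UNIV. \<Sum>k\<in>UNIV. (Gp i l j * Om j k) *\<^sub>R F l k)"
      by (rule sum_rot3[symmetric])
    also have "\<dots> = (\<Sum>l\<in>UNIV. \<Sum>k\<in>UNIV. \<Sum>j\<in>UNIV. (Gp i l j * Om j k) *\<^sub>R F l k)"
      by (rule sum.cong[OF refl], rule sum.swap)
    also have "\<dots> = A1" unfolding A1_def by (rule refl)
    finally show ?thesis .
  qed
  have B2: "(\<Sum>j\<in>UNIV. \<Sum>k\<in>UNIV. Om j k *\<^sub>R (\<Sum>l\<in>UNIV. Gp i l k *\<^sub>R F j l)) = A2"
  proof -
    have "(\<Sum>j\<in>UNIV. \<Sum>k\<in>UNIV. Om j k *\<^sub>R (\<Sum>l\<in>UNIV. Gp i l k *\<^sub>R F j l))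
       = (\<Sum>j\<in>UNIV. \<Sum>k\<in>UNIV. \<Sum>l\<in>UNIV. (Gp i l k * Om j k) *\<^sub>R F j l)"
      by (simp add: scaleR_sum_right mult.commute)
    also have "\<dots> = (\<Sum>j\<in>UNIV. \<Sum>l\<in>UNIV. \<Sum>k\<in>UNIV. (Gp i l k * Om j k) *\<^sub>R F j l)"
      by (rule sum.cong[OF refl], rule sum.swap)
    also have "\<dots> = A2" unfolding A2_def by (rule refl)
    finally show ?thesis .
  qed
  have "(\<Sum>j\<in>UNIV. \<Sum>k\<in>UNIV. Om j k *\<^sub>R N i j k)
     = (\<Sum>j\<in>UNIV. \<Sum>k\<in>UNIV. Om j k *\<^sub>R dF i j k) + (\<Sum>j\<in>UNIV. \<Sum>k\<in>UNIV. Om j k *\<^sub>R Cm i (F j k))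
       - (\<Sum>j\<in>UNIV. \<Sum>k\<in>UNIV. Om j k *\<^sub>R (\<Sum>l\<in>UNIV. Gp i l j *\<^sub>R F l k))
       - (\<Sum>j\<in>UNIV. \<Sum>k\<in>UNIV. Om j k *\<^sub>R (\<Sum>l\<in>UNIV. Gp i l k *\<^sub>R F j l))"
    by (simp add: hN scaleR_right_distrib scaleR_right_diff_distrib sum.distrib sum_subtractf)
  also have "\<dots> = 0"
  proof -
    have "(\<Sum>j\<in>UNIV. \<Sum>k\<in>UNIV. Om j k *\<^sub>R dF i j k) = - (\<Sum>j\<in>UNIV. \<Sum>k\<in>UNIV. dOm i j k *\<^sub>R F j k)"
      using hdtr by (simp add: sum.distrib eq_neg_iff_add_eq_0 add.commute)
    then show ?thesis using dOmF B1 B2 hCtr by simp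
  qed
  finally show ?thesis .
qed

lemma J_g_antisym:
  fixes g gi J :: "'n::finite \<Rightarrow> 'n \<Rightarrow> real"
  assumes hJJ: "\<And>k j. (\<Sum>l\<in>UNIV. J k l * J l j) = (if k = j then -1 else 0)"
    and hJgJ: "\<And>i j. (\<Sum>k\<in>UNIV. \<Sum>l\<in>UNIV. J k i * J l j * g k l) = g i j"
    and hggi: "\<And>a c. (\<Sum>b\<in>UNIV. g a b * gi b c) = (if a = c then 1 else 0)"
    and hgig: "\<And>a c. (\<Sum>b\<in>UNIV. gi a b * g b c) = (if a = c then 1 else 0)"
    and hgis: "\<And>a b. gi a b = gi b a"
  shows "(\<Sum>k\<in>UNIV. J b k * gi k a) = - (\<Sum>k\<in>UNIV. J a k * gi k b)"
proof -
  have E1: "(\<Sum>k\<in>UNIV. J k i * g k l) = - (\<Sum>k\<in>UNIV. g i k * J k l)" for i l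
  proof -
    have "(\<Sum>k\<in>UNIV. J k i * g k l) = (\<Sum>k\<in>UNIV. \<Sum>p\<in>UNIV. \<Sum>q\<in>UNIV. J k i * (J p k * J q l * g p q))"
    proof (rule sum.cong[OF refl])
      fix k
      have "J k i * g k l = J k i * (\<Sum>p\<in>UNIV. \<Sum>q\<in>UNIV. J p k * J q l * g p q)"
        by (simp add: hJgJ)
      then show "J k i * g k l = (\<Sum>p\<in>UNIV. \<Sum>q\<in>UNIV. J k i * (J p k * J q l * g p q))"
        by (simp add: sum_distrib_left)
    qed
    also have "\<dots> = (\<Sum>p\<in>UNIV. \<Sum>q\<in>UNIV. \<Sum>k\<in>UNIV. J k i * (J p k * J q l * g p q))"
      by (rule sum_rot3)
    also have "\<dots> = (\<Sum>p\<in>UNIV. \<Sum>q\<in>UNIV. (\<Sum>k\<in>UNIV. J p k * J k i) * (J q l * g p q))"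
      by (simp add: sum_distrib_right sum_distrib_left mult_ac)
    also have "\<dots> = (\<Sum>p\<in>UNIV. \<Sum>q\<in>UNIV. (if p = i then -1 else 0) * (J q l * g p q))"
      by (simp only: hJJ)
    also have "\<dots> = (\<Sum>q\<in>UNIV. \<Sum>p\<in>UNIV. (if p = i then -1 else 0) * (J q l * g p q))"
      by (rule sum.swap)
    also have "\<dots> = - (\<Sum>k\<in>UNIV. g i k * J k l)"
      by (simp only: delta_r) (simp add: sum_negf mult_ac)
    finally show ?thesis .
  qed
  have L: "(\<Sum>i\<in>UNIV. \<Sum>l\<in>UNIV. gi a i * (\<Sum>k\<in>UNIV. J k i * g k l) * gi l b) = (\<Sum>k\<in>UNIV. J b k * gi k a)"
  proof -
    have "(\<Sum>i\<in>UNIV. \<Sum>l\<in>UNIV. gi a i * (\<Sum>k\<in>UNIV. J k i * g k l) * gi l b)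
        = (\<Sum>i\<in>UNIV. \<Sum>l\<in>UNIV. \<Sum>k\<in>UNIV. (gi a i * J k i) * (g k l * gi l b))"
      by (simp add: sum_distrib_left sum_distrib_right mult_ac)
    also have "\<dots> = (\<Sum>i\<in>UNIV. \<Sum>k\<in>UNIV. (gi a i * J k i) * (\<Sum>l\<in>UNIV. g k l * gi l b))"
      by (rule sum.cong[OF refl]) (subst sum.swap, simp add: sum_distrib_left)
    also have "\<dots> = (\<Sum>i\<in>UNIV. gi a i * J b i)"
      by (simp add: hggi dm1)
    also have "\<dots> = (\<Sum>k\<in>UNIV. J b k * gi k a)"
      by (simp add: hgis mult.commute)
    finally show ?thesis .
  qed
  have R: "(\<Sum>i\<in>UNIV. \<Sum>l\<in>UNIV. gi a i * (\<Sum>k\<in>UNIV. g i k * J k l) * gi l b) = (\<Sum>k\<in>UNIV. J a k * gi k b)"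
  proof -
    have "(\<Sum>i\<in>UNIV. \<Sum>l\<in>UNIV. gi a i * (\<Sum>k\<in>UNIV. g i k * J k l) * gi l b)
        = (\<Sum>i\<in>UNIV. \<Sum>l\<in>UNIV. \<Sum>k\<in>UNIV. (gi a i * g i k) * (J k l * gi l b))"
      by (simp add: sum_distrib_left sum_distrib_right mult_ac)
    also have "\<dots> = (\<Sum>l\<in>UNIV. \<Sum>k\<in>UNIV. \<Sum>i\<in>UNIV. (gi a i * g i k) * (J k l * gi l b))"
      by (rule sum_rot3)
    also have "\<dots> = (\<Sum>l\<in>UNIV. \<Sum>k\<in>UNIV. (\<Sum>i\<in>UNIV. gi a i * g i k) * (J k l * gi l b))"
      by (simp add: sum_distrib_right)
    also have "\<dots> = (\<Sum>l\<in>UNIV. J a l * gi l b)"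
      by (simp add: hgig delta_l)
    finally show ?thesis .
  qed
  show ?thesis using L R E1 by (simp add: sum_negf)
qed

lemma Omup_simp:
  fixes g gi J :: "'n::finite \<Rightarrow> 'n \<Rightarrow> real"
  assumes hgig: "\<And>a c. (\<Sum>b\<in>UNIV. gi a b * g b c) = (if a = c then 1 else 0)"
    and hgis: "\<And>a b. gi a b = gi b a"
  shows "(\<Sum>a\<in>UNIV. \<Sum>b\<in>UNIV. gi k a * gi l b * (\<Sum>c\<in>UNIV. g a c * J c b)) = (\<Sum>b\<in>UNIV. J k b * gi b l)"
proof -
  have "(\<Sum>a\<in>UNIV. \<Sum>b\<in>UNIV. gi k a * gi l b * (\<Sum>c\<in>UNIV. g a c * J c b))
      = (\<Sum>a\<in>UNIV. \<Sum>b\<in>UNIV. \<Sum>c\<in>UNIV. (gi k a * g a c) * (gi l b * J c b))"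
    by (simp add: sum_distrib_left mult_ac)
  also have "\<dots> = (\<Sum>b\<in>UNIV. \<Sum>c\<in>UNIV. \<Sum>a\<in>UNIV. (gi k a * g a c) * (gi l b * J c b))"
    by (rule sum_rot3)
  also have "\<dots> = (\<Sum>b\<in>UNIV. \<Sum>c\<in>UNIV. (\<Sum>a\<in>UNIV. gi k a * g a c) * (gi l b * J c b))"
    by (simp add: sum_distrib_right)
  also have "\<dots> = (\<Sum>b\<in>UNIV. J k b * gi b l)"
    by (simp only: hgig delta_l) (simp add: mult.commute hgis[of l])
  finally show ?thesis .
qed


lemma mm_diff_ldistrib: "(A::'a::ring_1^'n^'m) ** (B - C) = A ** B - A ** C"
  by (vector matrix_matrix_mult_def sum_subtractf[symmetric] field_simps)
lemma mm_diff_rdistrib: "((A::'a::ring_1^'n^'m) - B) ** C = A ** C - B ** C"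
  by (vector matrix_matrix_mult_def sum_subtractf[symmetric] field_simps)

lemma bianchi_alg:
  fixes a :: "'n \<Rightarrow> complex^'r^'r" and da :: "'n \<Rightarrow> 'n \<Rightarrow> complex^'r^'r" and dda :: "'n \<Rightarrow> 'n \<Rightarrow> 'n \<Rightarrow> complex^'r^'r"
  assumes sw: "\<And>k i j. dda k i j = dda i k j"
  defines "F \<equiv> \<lambda>i j. da i j - da j i + (a i ** a j - a j ** a i)"
    and "dF \<equiv> \<lambda>k i j. dda k i j - dda k j i + ((a i ** da k j + da k i ** a j) - (a j ** da k i + da k j ** a i))"
    and "Cm \<equiv> \<lambda>k v. a k ** v - v ** a k"
  shows "dF k i j + dF i j k + dF j k i + Cm k (F i j) + Cm i (F j k) + Cm j (F k i) = 0"
proof -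
  have s: "dda k i j - dda k j i + (dda i j k - dda i k j) + (dda j k i - dda j i k) = 0"
    using sw[of k i j] sw[of k j i] sw[of i j k] by (simp add: algebra_simps)
  show ?thesis
    unfolding F_def dF_def Cm_def
    using s
    by (simp add: matrix_add_ldistrib mm_add_rdistrib mm_diff_ldistrib mm_diff_rdistrib matrix_mul_assoc algebra_simps)
qed

lemma mm_scaleR_right: "(A::complex^'n^'m) ** (c *\<^sub>R B) = c *\<^sub>R (A ** (B::complex^'p^'n))"
  by (simp add: matrix_scalar_ac scalar_matrix_assoc)
lemma mm_scaleR_left: "(c *\<^sub>R (A::complex^'n^'m)) ** B = c *\<^sub>R (A ** (B::complex^'p^'n))"
  by (simp add: scalar_matrix_assoc)

lemma lin_comm: "linear (\<lambda>v::complex^'r^'r. a ** v - v ** a)"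
  by (rule linearI) (simp_all add: matrix_add_ldistrib mm_add_rdistrib mm_scaleR_right mm_scaleR_left algebra_simps)

theorem mainTheorem7:
  fixes U :: "(real^'n) set" and m :: nat
    and G J :: "real^'n \<Rightarrow> 'n \<Rightarrow> 'n \<Rightarrow> real"
    and H :: "real^'n \<Rightarrow> 'n \<Rightarrow> 'n \<Rightarrow> 'n \<Rightarrow> real"
    and \<Phi> :: "real^'n \<Rightarrow> real"
    and A :: "real^'n \<Rightarrow> 'n \<Rightarrow> complex^'r^'r"
  assumes "open U"
    and "CARD('n) = 2 * m"
    and "conf_balanced U G J H \<Phi>"
    and "\<forall>i. smooth_fn U (\<lambda>x. A x i)"
    and "\<forall>x\<in>U. type11 J (curv A) x"
    and "\<forall>x\<in>U. (\<Sum>i\<in>UNIV. \<Sum>j\<in>UNIV. Omup G J x i j *\<^sub>R curv A x i j) = 0"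
  shows "\<forall>x\<in>U. \<forall>j. (\<Sum>i\<in>UNIV. \<Sum>k\<in>UNIV.
           Ginv G x i k *\<^sub>R Dplus G H A (\<lambda>y a b. exp (- 2 * \<Phi> y) *\<^sub>R curv A y a b) x k i j) = 0"
proof (intro ballI allI)
  fix x j assume xU: "x \<in> U"
  note oU = assms(1)
  have KT: "KT U G J H" and smPhi: "smooth_fn U \<Phi>" and lee: "\<forall>x\<in>U. \<forall>i. Lee G J H x i = 2 * pd \<Phi> i x"
    using assms(3) unfolding conf_balanced_def by blast+
  have herm: "hermitian U G J" and tf: "three_form U H"
    and kteq: "\<forall>x\<in>U. \<forall>i k j. pd (\<lambda>y. J y k j) i x
        + (\<Sum>l\<in>UNIV. Gplus G H x i k l * J x l j)
        - (\<Sum>l\<in>UNIV. Gplus G H x i l j * J x k l) = 0"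
    using KT unfolding KT_def by blast+
  have rm: "riem_metric U G" and smJ: "\<And>k j. smooth_fn U (\<lambda>x. J x k j)"
    and JJ: "\<forall>x\<in>U. \<forall>k j. (\<Sum>l\<in>UNIV. J x k l * J x l j) = (if k = j then -1 else 0)"
    and JgJ: "\<forall>x\<in>U. \<forall>i j. (\<Sum>k\<in>UNIV. \<Sum>l\<in>UNIV. J x k i * J x l j * G x k l) = G x i j"
    using herm unfolding hermitian_def by blast+
  have smG: "\<And>i j. smooth_fn U (\<lambda>x. G x i j)" and gsym: "\<forall>x\<in>U. \<forall>i j. G x i j = G x j i"
    using rm unfolding riem_metric_def by blast+
  have Hanti: "\<forall>x\<in>U. \<forall>i j k. H x i j k = - H x j i k \<and> H x i j k = - H x i k j"
    using tf unfolding three_form_def by blast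
  have smA: "\<And>i. smooth_fn U (\<lambda>x. A x i)" using assms(4) by blast
  have dG: "\<And>a b. (\<lambda>y. G y a b) differentiable (at x)" using smooth_diff[OF oU xU smG] .
  have dJd: "\<And>a b. (\<lambda>y. J y a b) differentiable (at x)" using smooth_diff[OF oU xU smJ] .
  have dGi: "\<And>a b. (\<lambda>y. Ginv G y a b) differentiable (at x)" using Ginv_differentiable[OF oU xU rm] .
  have dA: "\<And>i. (\<lambda>y. A y i) differentiable (at x)" using smooth_diff[OF oU xU smA] .
  have dpA: "\<And>i k. pd (\<lambda>y. A y i) k differentiable (at x)" using smooth_diff[OF oU xU smooth_pd[OF smA]] .
  have dPhi: "\<Phi> differentiable (at x)" using smooth_diff[OF oU xU smPhi] .
  have dcurv: "\<And>i j. (\<lambda>y. curv A y i j) differentiable (at x)"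
    unfolding curv_def by (intro differentiable_add differentiable_diff diff_mm dA dpA)

  define g where "g a b = G x a b" for a b
  define gi where "gi a b = Ginv G x a b" for a b
  define Jx where "Jx a b = J x a b" for a b
  define dg where "dg c a b = pd (\<lambda>y. G y a b) c x" for c a b
  define dgi where "dgi c a b = pd (\<lambda>y. Ginv G y a b) c x" for c a b
  define dJ where "dJ c a b = pd (\<lambda>y. J y a b) c x" for c a b
  define Hu where "Hu l a b = Hup G H x l a b" for l a b
  define LCx where "LCx l a b = LC G x l a b" for l a b
  define Gp where "Gp k l i = Gplus G H x k l i" for k l i
  define F where "F i j = curv A x i j" for i j
  define dF where "dF k i j = pd (\<lambda>y. curv A y i j) k x" for k i j
  define Cm where "Cm k v = A x k ** v - v ** A x k" for k v
  define N where "N k i j = dF k i j + Cm k (F i j) - (\<Sum>l\<in>UNIV. Gp k l i *\<^sub>R F l j) - (\<Sum>l\<in>UNIV. Gp k l j *\<^sub>R F i l)" for k i j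
  define Om where "Om j k = (\<Sum>b\<in>UNIV. Jx j b * gi b k)" for j k
  define th where "th i = Lee G J H x i" for i
  define dOm where "dOm i j k = (\<Sum>b\<in>UNIV. dJ i j b * gi b k + Jx j b * dgi i b k)" for i j k
  have hggi: "\<And>a c. (\<Sum>b\<in>UNIV. g a b * gi b c) = (if a = c then 1 else 0)"
    unfolding g_def gi_def using Ginv_props(1)[OF rm xU] .
  have hgig: "\<And>a c. (\<Sum>b\<in>UNIV. gi a b * g b c) = (if a = c then 1 else 0)"
    unfolding g_def gi_def using Ginv_props(2)[OF rm xU] .
  have hgis: "\<And>a b. gi a b = gi b a"
    unfolding gi_def using Ginv_props(3)[OF rm xU] .
  have hgs: "\<And>a b. g a b = g b a" unfolding g_def using gsym xU by blast
  have hJJ: "\<And>k j. (\<Sum>l\<in>UNIV. Jx k l * Jx l j) = (if k = j then -1 else 0)"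
    unfolding Jx_def using JJ xU by blast
  have hJgJ: "\<And>i j. (\<Sum>k\<in>UNIV. \<Sum>l\<in>UNIV. Jx k i * Jx l j * g k l) = g i j"
    unfolding Jx_def g_def using JgJ xU by blast
  have hH1: "\<And>a b c. H x a b c = - H x b a c" using Hanti xU by blast
  have hH2: "\<And>a b c. H x a b c = - H x a c b" using Hanti xU by blast
  have hHu: "\<And>l a b. Hu l a b = (\<Sum>m\<in>UNIV. gi l m * H x m a b)"
    unfolding Hu_def gi_def Hup_def by simp
  have hGp: "\<And>k l i. Gp k l i = LCx l k i + 1/2 * Hu l k i"
    unfolding Gp_def LCx_def Hu_def Gplus_def by simp
  have hLCd: "\<And>k i j. LCx k i j = 1/2 * (\<Sum>l\<in>UNIV. gi k l * (dg i l j + dg j l i - dg l i j))"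
    unfolding LCx_def gi_def dg_def LC_def by simp
  have hdgs: "dg c a b = dg c b a" for c a b
    unfolding dg_def by (rule pd_local[OF oU xU]) (use gsym in blast)
  have hLC: "\<And>l a b. LCx l a b = LCx l b a"
    unfolding hLCd using hdgs by (simp add: algebra_simps)
  have HuA: "Hu l a b = - Hu l b a" for l a b
    unfolding hHu by (simp add: sum_negf[symmetric] hH2[of _ a b])
  have hmc: "\<And>i a b. dg i a b = (\<Sum>l\<in>UNIV. Gp i l a * g l b) + (\<Sum>l\<in>UNIV. Gp i l b * g a l)"
    by (rule metric_compat[OF hLCd hdgs hggi hgs hHu hGp hH1 hH2])

  have hd: "(\<Sum>b\<in>UNIV. dg i a b * gi b c) + (\<Sum>b\<in>UNIV. g a b * dgi i b c) = 0" for i a c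
  proof -
    have e: "pd (\<lambda>y. \<Sum>b\<in>UNIV. G y a b * Ginv G y b c) i x = pd (\<lambda>y. if a = c then 1 else (0::real)) i x"
      by (rule pd_local[OF oU xU]) (simp add: Ginv_props(1)[OF rm])
    have "pd (\<lambda>y. \<Sum>b\<in>UNIV. G y a b * Ginv G y b c) i x
        = (\<Sum>b\<in>UNIV. pd (\<lambda>y. G y a b * Ginv G y b c) i x)"
      by (rule pd_sum) (simp add: dG dGi)
    also have "\<dots> = (\<Sum>b\<in>UNIV. G x a b * pd (\<lambda>y. Ginv G y b c) i x + pd (\<lambda>y. G y a b) i x * Ginv G x b c)"
      by (rule sum.cong[OF refl]) (rule pd_mult[OF dG dGi])
    finally show ?thesis using e
      by (simp add: pd_const g_def gi_def dg_def dgi_def sum.distrib algebra_simps)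
  qed
  have hdgi: "dgi i k c = - (\<Sum>l\<in>UNIV. Gp i k l * gi l c) - (\<Sum>l\<in>UNIV. Gp i c l * gi k l)" for i k c
    by (rule dgi_formula[OF hd hmc hggi hgig])
  have hdJ: "dJ i k j = - (\<Sum>l\<in>UNIV. Gp i k l * Jx l j) + (\<Sum>l\<in>UNIV. Gp i l j * Jx k l)" for i k j
  proof -
    have "dJ i k j + (\<Sum>l\<in>UNIV. Gp i k l * Jx l j) - (\<Sum>l\<in>UNIV. Gp i l j * Jx k l) = 0"
      unfolding dJ_def Gp_def Jx_def using kteq xU by blast
    then show ?thesis by linarith
  qed
  have hdOm: "dOm i j k = - (\<Sum>l\<in>UNIV. Gp i j l * Om l k) - (\<Sum>l\<in>UNIV. Gp i k l * Om j l)" for i j k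
    unfolding dOm_def by (rule dOm_formula[OF hdJ hdgi Om_def])
  have trU: "(\<Sum>j\<in>UNIV. \<Sum>k\<in>UNIV. (\<Sum>b\<in>UNIV. J y j b * Ginv G y b k) *\<^sub>R curv A y j k) = 0" if yU: "y \<in> U" for y
  proof -
    have "Omup G J y j k = (\<Sum>b\<in>UNIV. J y j b * Ginv G y b k)" for j k
      unfolding Omup_def Defs.Om_def
      by (rule Omup_simp[where gi="Ginv G y" and g="G y" and J="J y" and k=j and l=k])
         (use Ginv_props[OF rm yU] in auto)
    moreover have "(\<Sum>i\<in>UNIV. \<Sum>j\<in>UNIV. Omup G J y i j *\<^sub>R curv A y i j) = 0" using assms(6) yU by blast
    ultimately show ?thesis by simp
  qed
  have dinner: "(\<lambda>y. \<Sum>b\<in>UNIV. J y j b * Ginv G y b k) differentiable (at x)" for j k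
    by (simp add: dJd dGi)
  have hdtr: "(\<Sum>j\<in>UNIV. \<Sum>k\<in>UNIV. dOm i j k *\<^sub>R F j k + Om j k *\<^sub>R dF i j k) = 0" for i
  proof -
    have e: "pd (\<lambda>y. \<Sum>j\<in>UNIV. \<Sum>k\<in>UNIV. (\<Sum>b\<in>UNIV. J y j b * Ginv G y b k) *\<^sub>R curv A y j k) i x
        = pd (\<lambda>y. 0::complex^'r^'r) i x"
      by (rule pd_local[OF oU xU]) (rule trU)
    have pin: "pd (\<lambda>y. \<Sum>b\<in>UNIV. J y j b * Ginv G y b k) i x = dOm i j k" for j k
    proof -
      have "pd (\<lambda>y. \<Sum>b\<in>UNIV. J y j b * Ginv G y b k) i x = (\<Sum>b\<in>UNIV. pd (\<lambda>y. J y j b * Ginv G y b k) i x)"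
        by (rule pd_sum) (simp add: dJd dGi)
      also have "\<dots> = dOm i j k"
        unfolding dOm_def by (rule sum.cong[OF refl]) (simp add: pd_mult[OF dJd dGi] dJ_def dgi_def Jx_def gi_def)
      finally show ?thesis .
    qed
    have "pd (\<lambda>y. \<Sum>j\<in>UNIV. \<Sum>k\<in>UNIV. (\<Sum>b\<in>UNIV. J y j b * Ginv G y b k) *\<^sub>R curv A y j k) i x
       = (\<Sum>j\<in>UNIV. \<Sum>k\<in>UNIV. pd (\<lambda>y. (\<Sum>b\<in>UNIV. J y j b * Ginv G y b k) *\<^sub>R curv A y j k) i x)"
      by (subst pd_sum, simp add: dinner dcurv, rule sum.cong[OF refl], rule pd_sum, simp add: dinner dcurv)
    also have "\<dots> = (\<Sum>j\<in>UNIV. \<Sum>k\<in>UNIV. dOm i j k *\<^sub>R F j k + Om j k *\<^sub>R dF i j k)"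
      by (intro sum.cong refl) (simp add: pd_scaleR[OF dinner dcurv] pin Om_def Jx_def gi_def F_def dF_def)
    finally show ?thesis using e by (simp add: pd_const)
  qed
  have linC: "linear (Cm k)" for k unfolding Cm_def[abs_def] by (rule lin_comm)
  have hCtr: "(\<Sum>j\<in>UNIV. \<Sum>k\<in>UNIV. Om j k *\<^sub>R Cm i (F j k)) = 0" for i
  proof -
    have "(\<Sum>j\<in>UNIV. \<Sum>k\<in>UNIV. Om j k *\<^sub>R Cm i (F j k)) = Cm i (\<Sum>j\<in>UNIV. \<Sum>k\<in>UNIV. Om j k *\<^sub>R F j k)"
      by (simp add: linear_sum[OF linC] linear_scale[OF linC])
    also have "\<dots> = 0" using trU[OF xU] linear_0[OF linC]
      by (simp add: Om_def Jx_def gi_def F_def)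
    finally show ?thesis .
  qed
  have hT: "(\<Sum>j\<in>UNIV. \<Sum>k\<in>UNIV. Om j k *\<^sub>R N i j k) = 0" for i
    by (rule trace_N[OF N_def hdtr hCtr hdOm])

  have t11: "\<And>y i j. y \<in> U \<Longrightarrow> (\<Sum>a\<in>UNIV. \<Sum>b\<in>UNIV. (J y a i * J y b j) *\<^sub>R curv A y a b) = curv A y i j"
    using assms(5) unfolding type11_def by blast
  have hF11: "F i j = (\<Sum>a\<in>UNIV. \<Sum>b\<in>UNIV. (Jx a i * Jx b j) *\<^sub>R F a b)" for i j
    unfolding F_def Jx_def using t11[OF xU] by simp
  have curv_anti: "curv A y a b = - curv A y b a" for y a b
    unfolding curv_def by (simp add: algebra_simps)
  have hFa: "F a b = - F b a" for a b unfolding F_def by (rule curv_anti)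
  have hdT: "dF k i j = (\<Sum>a\<in>UNIV. \<Sum>b\<in>UNIV. (dJ k a i * Jx b j + Jx a i * dJ k b j) *\<^sub>R F a b)
                 + (\<Sum>a\<in>UNIV. \<Sum>b\<in>UNIV. (Jx a i * Jx b j) *\<^sub>R dF k a b)" for k i j
  proof -
    have dprod: "(\<lambda>y. J y a i * J y b j) differentiable (at x)" for a b by (simp add: dJd)
    have e: "dF k i j = pd (\<lambda>y. \<Sum>a\<in>UNIV. \<Sum>b\<in>UNIV. (J y a i * J y b j) *\<^sub>R curv A y a b) k x"
      unfolding dF_def by (rule pd_local[OF oU xU]) (simp add: t11)
    also have "\<dots> = (\<Sum>a\<in>UNIV. \<Sum>b\<in>UNIV. pd (\<lambda>y. (J y a i * J y b j) *\<^sub>R curv A y a b) k x)"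
      by (subst pd_sum, simp add: dJd dcurv, rule sum.cong[OF refl], rule pd_sum, simp add: dJd dcurv)
    also have "\<dots> = (\<Sum>a\<in>UNIV. \<Sum>b\<in>UNIV. (Jx a i * Jx b j) *\<^sub>R dF k a b + (dJ k a i * Jx b j + Jx a i * dJ k b j) *\<^sub>R F a b)"
      by (intro sum.cong refl)
         (simp add: pd_scaleR[OF dprod dcurv] pd_mult[OF dJd dJd] Jx_def dJ_def dF_def F_def algebra_simps)
    finally show ?thesis by (simp add: sum.distrib add.commute)
  qed
  have hN11: "N k i j = (\<Sum>a\<in>UNIV. \<Sum>b\<in>UNIV. (Jx a i * Jx b j) *\<^sub>R N k a b)" for k i j
    by (rule N11[OF hF11 hdT hdJ linC N_def])
  have dFa: "dF k i j = - dF k j i" for k i j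
  proof -
    have "dF k i j = pd (\<lambda>y. - curv A y j i) k x" unfolding dF_def by (simp add: curv_anti[of _ i j])
    also have "\<dots> = - dF k j i" unfolding dF_def by (rule pd_neg[OF dcurv])
    finally show ?thesis .
  qed
  have CmN: "Cm k (- v) = - Cm k v" for k v using linear_neg[OF linC] by simp
  have hNa: "N k i j = - N k j i" for k i j
  proof -
    have s1: "(\<Sum>l\<in>UNIV. Gp k l j *\<^sub>R F l i) = - (\<Sum>l\<in>UNIV. Gp k l j *\<^sub>R F i l)"
      by (simp add: sum_negf[symmetric] hFa[of _ i])
    have s2: "(\<Sum>l\<in>UNIV. Gp k l i *\<^sub>R F j l) = - (\<Sum>l\<in>UNIV. Gp k l i *\<^sub>R F l j)"
      by (simp add: sum_negf[symmetric] hFa[of j])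
    show ?thesis unfolding N_def using s1 s2 dFa[of k j i] hFa[of j i] CmN by simp
  qed

  define da where "da k i = pd (\<lambda>y. A y i) k x" for k i
  define dda where "dda k i j = pd (pd (\<lambda>y. A y j) i) k x" for k i j
  have sw: "dda k i j = dda i k j" for k i j
    unfolding dda_def by (rule schwarz[OF oU xU smA])
  have Ff: "F i j = da i j - da j i + (A x i ** A x j - A x j ** A x i)" for i j
    unfolding F_def curv_def da_def by simp
  have dFf: "dF k i j = dda k i j - dda k j i + ((A x i ** da k j + da k i ** A x j) - (A x j ** da k i + da k j ** A x i))" for k i j
  proof -
    have "dF k i j = pd (\<lambda>y. (pd (\<lambda>y. A y j) i y - pd (\<lambda>y. A y i) j y) + (A y i ** A y j - A y j ** A y i)) k x"
      unfolding dF_def curv_def by simp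
    also have "\<dots> = (pd (pd (\<lambda>y. A y j) i) k x - pd (pd (\<lambda>y. A y i) j) k x)
        + (pd (\<lambda>y. A y i ** A y j) k x - pd (\<lambda>y. A y j ** A y i) k x)"
      by (simp add: pd_add pd_diff dpA dA diff_mm)
    also have "\<dots> = dda k i j - dda k j i + ((A x i ** da k j + da k i ** A x j) - (A x j ** da k i + da k j ** A x i))"
      by (simp add: pd_mm[OF dA dA] dda_def da_def)
    finally show ?thesis .
  qed
  have raw: "dF k i j + dF i j k + dF j k i + Cm k (F i j) + Cm i (F j k) + Cm j (F k i) = 0" for k i j
    using bianchi_alg[where a="A x" and da=da and dda=dda and k=k and i=i and j=j, OF sw] unfolding dFf Ff Cm_def by simp
  have hB: "N k i j + N i j k + N j k i =
        - (\<Sum>l\<in>UNIV. Hu l k i *\<^sub>R F l j + Hu l j k *\<^sub>R F l i + Hu l i j *\<^sub>R F l k)" for k i j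
    by (rule Bian[OF N_def raw hGp hLC HuA hFa])
  have hJg: "(\<Sum>k\<in>UNIV. Jx b k * gi k a) = - (\<Sum>k\<in>UNIV. Jx a k * gi k b)" for a b
    by (rule J_g_antisym[OF hJJ hJgJ hggi hgig hgis])
  have OmupX: "Omup G J x k l = Om k l" for k l
    unfolding Omup_def Defs.Om_def Om_def Jx_def gi_def
    by (rule Omup_simp[where gi="Ginv G x" and g="G x" and J="J x" and k=k and l=l])
       (use Ginv_props[OF rm xU] in auto)
  have hth: "th i = 1/2 * (\<Sum>j\<in>UNIV. \<Sum>k\<in>UNIV. \<Sum>l\<in>UNIV. Jx j i * H x j k l * Om k l)" for i
    unfolding th_def Lee_def Jx_def OmupX by simp
  have main: "(\<Sum>i\<in>UNIV. \<Sum>k\<in>UNIV. gi i k *\<^sub>R N k i j) = (\<Sum>i\<in>UNIV. \<Sum>k\<in>UNIV. (gi i k * th k) *\<^sub>R F i j)"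
    by (rule alg_main[OF Om_def hHu hJJ hgis hJg hH1 hH2 hFa hF11 hN11 hNa hT hB hth])

  define e where "e = exp (- 2 * \<Phi> x)"
  have dlin: "(\<lambda>y. - 2 * \<Phi> y) differentiable (at x)" by (simp add: dPhi)
  have dE: "(\<lambda>y. exp (- 2 * \<Phi> y)) differentiable (at x)"
    using has_derivative_exp[OF pd_hd[OF dlin]] differentiable_def by blast
  have pE: "pd (\<lambda>y. exp (- 2 * \<Phi> y)) k x = e * (- th k)" for k
  proof -
    have "pd (\<lambda>y. exp (- 2 * \<Phi> y)) k x = exp (- 2 * \<Phi> x) * pd (\<lambda>y. - 2 * \<Phi> y) k x"
      by (rule pd_exp[OF dlin])
    also have "pd (\<lambda>y. - 2 * \<Phi> y) k x = - 2 * pd \<Phi> k x"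
      using pd_mult[OF differentiable_const dPhi, of "- 2" k] by (simp add: pd_const)
    finally show ?thesis unfolding e_def th_def using lee xU by simp
  qed
  have Dp: "Dplus G H A (\<lambda>y a b. exp (- 2 * \<Phi> y) *\<^sub>R curv A y a b) x k i j = e *\<^sub>R (N k i j - th k *\<^sub>R F i j)" for k i
  proof -
    have p: "pd (\<lambda>y. exp (- 2 * \<Phi> y) *\<^sub>R curv A y i j) k x = e *\<^sub>R dF k i j + (e * (- th k)) *\<^sub>R F i j"
      using pd_scaleR[OF dE dcurv[of i j], of k] pE[of k] unfolding e_def dF_def F_def by simp
    have Tx: "exp (- 2 * \<Phi> x) *\<^sub>R curv A x a b = e *\<^sub>R F a b" for a b by (simp add: e_def F_def)
    show ?thesis
      unfolding Dplus_def p
      apply (simp only: Tx)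
      by (simp add: N_def Cm_def Gp_def mm_scaleR_left mm_scaleR_right
          scaleR_right_diff_distrib scaleR_right_distrib scaleR_sum_right algebra_simps)
  qed
  have "(\<Sum>i\<in>UNIV. \<Sum>k\<in>UNIV. Ginv G x i k *\<^sub>R Dplus G H A (\<lambda>y a b. exp (- 2 * \<Phi> y) *\<^sub>R curv A y a b) x k i j)
      = e *\<^sub>R ((\<Sum>i\<in>UNIV. \<Sum>k\<in>UNIV. gi i k *\<^sub>R N k i j) - (\<Sum>i\<in>UNIV. \<Sum>k\<in>UNIV. (gi i k * th k) *\<^sub>R F i j))"
    apply (simp only: Dp)
    by (simp add: gi_def scaleR_right_diff_distrib scaleR_sum_right sum_subtractf algebra_simps)
  also have "\<dots> = 0" using main by simp
  finally show "(\<Sum>i\<in>UNIV. \<Sum>k\<in>UNIV. Ginv G x i k *\<^sub>R Dplus G H A (\<lambda>y a b. exp (- 2 * \<Phi> y) *\<^sub>R curv A y a b) x k i j) = 0" .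
qed


end
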